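(* Let $\gamma$ be an orientation preserving isometry of $\mathbb{H}^4$. Then for each $k\in\mathcal{K}_\gamma$ there exist $k_1,k_2\in\mathcal{K}_\gamma$ such that $\gamma=H_{k_1}H_k=H_kH_{k_2}$.
   Context: Work in $\mathbb{H}^4$ with boundary $\widehat{\mathbb{R}^3}$; for a circle $k$ bounding a plane $P$, $H_k=H_P$ is the half-turn about $P$, the orientation preserving involution obtained as the composition of reflections across two orthogonal hyperplanes intersecting in $P$. The half-turn bank $\mathcal{K}_\gamma$ is the following set of circles: (i) If $\gamma$ is atomic (type-I elliptic, pure hyperbolic or pure parabolic), $\mathcal{K}_\gamma=\{s\cap t: s\in\mathcal{F}_\gamma,\ t\in\mathcal{T}_\gamma\}$, where: for type-I elliptic $\gamma$ with fixed plane $P$, $\mathcal{F}_\gamma$ = boundaries of hyperplanes containing $P$, $\mathcal{T}_\gamma$ = boundaries of hyperplanes orthogonal to $P$; for pure hyperbolic $\gamma$ with axis $L$, $\mathcal{F}_\gamma$ = boundaries of hyperplanes orthogonal to $L$, $\mathcal{T}_\gamma$ = boundaries of hyperplanes containing $L$; for pure parabolic $\gamma$ conjugated to $x\mapsto x+b$, $\mathcal{F}_\gamma$ = Euclidean planes orthogonal to $b$ (with $\infty$), $\mathcal{T}_\gamma$ = Euclidean planes parallel to $b$ (with $\infty$). (ii) If $\gamma$ is pure loxodromic or screw parabolic, $\gamma=\tau\rho=\rho\tau$ with translation part $\tau$ and rotational part $\rho$ (type-I elliptic with fixed plane $P$, the twisting plane); $\mathcal{K}_\gamma=\{s\cap t: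 s\in\mathcal{F}_\tau,\ t\in\mathcal{R}_\gamma\}$ with $\mathcal{R}_\gamma$ the boundaries of hyperplanes containing $P$. (iii) If $\gamma$ is type-II elliptic (unique fixed point) and not an involution, $\gamma=\rho_1\rho_2$ with $\rho_i$ the unique commuting type-I elliptic isometries whose fixed planes meet orthogonally at the fixed point, and $\mathcal{K}_\gamma=\{s\cap t: s\in\mathcal{F}_{\rho_1},\ t\in\mathcal{F}_{\rho_2}\}$. (iv) If $\gamma$ is a type-II elliptic involution with fixed point $x$, $\mathcal{K}_\gamma$ = boundaries of all planes through $x$. (v) $\mathcal{K}_{\mathrm{id}}$ = boundaries of all planes. *)

theory Defs
  imports "HOL-Analysis.Analysis"
begin

text \<open>Hyperboloid model of H^4 in Minkowski space R^(4,1) = real^5.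
  Coordinate 0 is the time coordinate, coordinates 1..4 are spatial.
  H^4 = {v. mink v v = -1, v$0 > 0}; its ideal boundary (identified with the
  one-point compactification of R^3) is the set of null rays.\<close>

definition mink :: "real^5 \<Rightarrow> real^5 \<Rightarrow> real" where
  "mink x y = x$1 * y$1 + x$2 * y$2 + x$3 * y$3 + x$4 * y$4 - x$0 * y$0"

definition mperp :: "(real^5) set \<Rightarrow> (real^5) set" where
  "mperp S = {v. \<forall>w\<in>S. mink v w = 0}"

definition timelike_subspace :: "(real^5) set \<Rightarrow> bool" where
  "timelike_subspace S \<longleftrightarrow> subspace S \<and> (\<exists>v\<in>S. mink v v < 0)"

text \<open>Totally geodesic k-dimensional subspaces of H^4 correspond to
  (k+1)-dimensional timelike linear subspaces.  A plane of H^4 and the circle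
  bounding it are identified with such a 3-dimensional subspace; a hyperplane
  of H^4 and the 2-sphere bounding it with a 4-dimensional one.\<close>
definition hpoint :: "(real^5) set \<Rightarrow> bool" where
  "hpoint S \<longleftrightarrow> timelike_subspace S \<and> dim S = 1"
definition hline :: "(real^5) set \<Rightarrow> bool" where
  "hline S \<longleftrightarrow> timelike_subspace S \<and> dim S = 2"
definition hplane :: "(real^5) set \<Rightarrow> bool" where
  "hplane S \<longleftrightarrow> timelike_subspace S \<and> dim S = 3"
definition hhyperplane :: "(real^5) set \<Rightarrow> bool" where
  "hhyperplane S \<longleftrightarrow> timelike_subspace S \<and> dim S = 4"

text \<open>A hyperplane U is orthogonal to a (timelike) subspace S (a line or a
  plane) iff its Minkowski normal direction lies in S.\<close>
definition hyp_orth :: "(real^5) set \<Rightarrow> (real^5) set \<Rightarrow> bool" where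
  "hyp_orth U S \<longleftrightarrow> mperp U \<subseteq> S"

definition orient_isom :: "(real^5 \<Rightarrow> real^5) \<Rightarrow> bool" where
  "orient_isom g \<longleftrightarrow> linear g \<and> (\<forall>x y. mink (g x) (g y) = mink x y)
     \<and> det (matrix g) = 1 \<and> (\<forall>v. mink v v < 0 \<and> v$0 > 0 \<longrightarrow> (g v)$0 > 0)"

definition fixspace :: "(real^5 \<Rightarrow> real^5) \<Rightarrow> (real^5) set" where
  "fixspace g = {v. g v = v}"

text \<open>Null eigenvectors = fixed points on the ideal boundary.\<close>
definition fixed_bdry :: "(real^5 \<Rightarrow> real^5) \<Rightarrow> (real^5) set" where
  "fixed_bdry g = {v. v \<noteq> 0 \<and> mink v v = 0 \<and> (\<exists>c. g v = c *\<^sub>R v)}"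

definition elliptic :: "(real^5 \<Rightarrow> real^5) \<Rightarrow> bool" where
  "elliptic g \<longleftrightarrow> orient_isom g \<and> (\<exists>v. mink v v < 0 \<and> g v = v)"

definition loxodromic :: "(real^5 \<Rightarrow> real^5) \<Rightarrow> bool" where
  "loxodromic g \<longleftrightarrow> orient_isom g \<and> \<not> elliptic g \<and>
     (\<exists>u\<in>fixed_bdry g. \<exists>v\<in>fixed_bdry g. \<not> (\<exists>c. v = c *\<^sub>R u))"

definition parabolic :: "(real^5 \<Rightarrow> real^5) \<Rightarrow> bool" where
  "parabolic g \<longleftrightarrow> orient_isom g \<and> \<not> elliptic g \<and> fixed_bdry g \<noteq> {} \<and>
     (\<forall>u\<in>fixed_bdry g. \<forall>v\<in>fixed_bdry g. \<exists>c. v = c *\<^sub>R u)"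

definition elliptic_I :: "(real^5 \<Rightarrow> real^5) \<Rightarrow> bool" where
  "elliptic_I g \<longleftrightarrow> elliptic g \<and> hplane (fixspace g)"
definition elliptic_II :: "(real^5 \<Rightarrow> real^5) \<Rightarrow> bool" where
  "elliptic_II g \<longleftrightarrow> elliptic g \<and> hpoint (fixspace g)"

definition axis :: "(real^5 \<Rightarrow> real^5) \<Rightarrow> (real^5) set" where
  "axis g = span (fixed_bdry g)"

definition pure_hyperbolic :: "(real^5 \<Rightarrow> real^5) \<Rightarrow> bool" where
  "pure_hyperbolic g \<longleftrightarrow> loxodromic g \<and> (\<forall>v\<in>mperp (axis g). g v = v)"

definition pure_loxodromic :: "(real^5 \<Rightarrow> real^5) \<Rightarrow> bool" where
  "pure_loxodromic g \<longleftrightarrow> loxodromic g \<and> \<not> pure_hyperbolic g"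

text \<open>Upper half-space chart of the boundary: x \<in> R^3 corresponds to the null ray of
  (x, (|x|^2-1)/2, (|x|^2+1)/2) (coordinates 1,2,3 ; 4 ; 0), and \<infinity> to the ray of
  (0,0,0,1,1).  The Lorentz transformation inducing x \<mapsto> x + b on the boundary:\<close>
definition par_transl :: "real^3 \<Rightarrow> real^5 \<Rightarrow> real^5" where
  "par_transl b v = (let u = v$0 - v$4; bv = b$1 * v$1 + b$2 * v$2 + b$3 * v$3 in
     (\<chi> i. if i = 1 then v$1 + b$1 * u else if i = 2 then v$2 + b$2 * u
           else if i = 3 then v$3 + b$3 * u else v$i + bv + (b \<bullet> b) / 2 * u))"

text \<open>The hyperplane whose boundary is the Euclidean plane {x. a \<bullet> x = c} \<union> {\<infinity>}
  (for a \<noteq> 0) is the Minkowski orthogonal complement of this vector.\<close>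
definition eucl_normal :: "real^3 \<Rightarrow> real \<Rightarrow> real^5" where
  "eucl_normal a c = (\<chi> i. if i = 1 then a$1 else if i = 2 then a$2
                        else if i = 3 then a$3 else c)"

definition eucl_plane_hyp :: "real^3 \<Rightarrow> real \<Rightarrow> (real^5) set" where
  "eucl_plane_hyp a c = mperp {eucl_normal a c}"

definition par_conj :: "(real^5 \<Rightarrow> real^5) \<Rightarrow> (real^5 \<Rightarrow> real^5) \<Rightarrow> real^3 \<Rightarrow> bool" where
  "par_conj h g b \<longleftrightarrow> orient_isom g \<and> b \<noteq> 0 \<and> h = g \<circ> par_transl b \<circ> inv g"

definition pure_parabolic :: "(real^5 \<Rightarrow> real^5) \<Rightarrow> bool" where
  "pure_parabolic h \<longleftrightarrow> orient_isom h \<and> (\<exists>g b. par_conj h g b)"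

definition screw_parabolic :: "(real^5 \<Rightarrow> real^5) \<Rightarrow> bool" where
  "screw_parabolic h \<longleftrightarrow> parabolic h \<and> \<not> pure_parabolic h"

text \<open>F and T families of a pure parabolic conjugated by g to x \<mapsto> x + b:
  (images under g of) the Euclidean planes orthogonal to b, resp. parallel to b.\<close>
definition parF :: "(real^5 \<Rightarrow> real^5) \<Rightarrow> real^3 \<Rightarrow> (real^5) set set" where
  "parF g b = {g ` eucl_plane_hyp a c | a c. a \<noteq> 0 \<and> (\<exists>l. a = l *\<^sub>R b)}"
definition parT :: "(real^5 \<Rightarrow> real^5) \<Rightarrow> real^3 \<Rightarrow> (real^5) set set" where
  "parT g b = {g ` eucl_plane_hyp a c | a c. a \<noteq> 0 \<and> a \<bullet> b = 0}"

definition halfturn :: "(real^5) set \<Rightarrow> (real^5 \<Rightarrow> real^5)" where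
  "halfturn W = (THE f. linear f \<and> (\<forall>v\<in>W. f v = v) \<and> (\<forall>v\<in>mperp W. f v = - v))"

definition bank :: "(real^5 \<Rightarrow> real^5) \<Rightarrow> (real^5) set set" where
  "bank h = {W. hplane W \<and> (
     \<comment> \<open>(v) identity\<close>
     h = id \<or>
     \<comment> \<open>(iv) type-II elliptic involution\<close>
     (elliptic_II h \<and> h \<circ> h = id \<and> fixspace h \<subseteq> W) \<or>
     \<comment> \<open>(i) type-I elliptic with fixed plane P\<close>
     (elliptic_I h \<and> (\<exists>s t. hhyperplane s \<and> fixspace h \<subseteq> s \<and>
          hhyperplane t \<and> hyp_orth t (fixspace h) \<and> W = s \<inter> t)) \<or>
     \<comment> \<open>(i) pure hyperbolic with axis L\<close>
     (pure_hyperbolic h \<and> (\<exists>s t. hhyperplane s \<and> hyp_orth s (axis h) \<and>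
          hhyperplane t \<and> axis h \<subseteq> t \<and> W = s \<inter> t)) \<or>
     \<comment> \<open>(i) pure parabolic\<close>
     (pure_parabolic h \<and> (\<exists>g b. par_conj h g b \<and>
          (\<exists>s\<in>parF g b. \<exists>t\<in>parT g b. W = s \<inter> t))) \<or>
     \<comment> \<open>(ii) pure loxodromic\<close>
     (pure_loxodromic h \<and> (\<exists>\<tau> \<rho>. pure_hyperbolic \<tau> \<and> elliptic_I \<rho> \<and>
          h = \<tau> \<circ> \<rho> \<and> h = \<rho> \<circ> \<tau> \<and>
          (\<exists>s t. hhyperplane s \<and> hyp_orth s (axis \<tau>) \<and>
                 hhyperplane t \<and> fixspace \<rho> \<subseteq> t \<and> W = s \<inter> t))) \<or>
     \<comment> \<open>(ii) screw parabolic\<close>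
     (screw_parabolic h \<and> (\<exists>\<tau> \<rho> g b. par_conj \<tau> g b \<and> elliptic_I \<rho> \<and>
          h = \<tau> \<circ> \<rho> \<and> h = \<rho> \<circ> \<tau> \<and>
          (\<exists>s\<in>parF g b. \<exists>t. hhyperplane t \<and> fixspace \<rho> \<subseteq> t \<and> W = s \<inter> t))) \<or>
     \<comment> \<open>(iii) type-II elliptic, not an involution\<close>
     (elliptic_II h \<and> h \<circ> h \<noteq> id \<and> (\<exists>\<rho>1 \<rho>2. elliptic_I \<rho>1 \<and> elliptic_I \<rho>2 \<and>
          h = \<rho>1 \<circ> \<rho>2 \<and> h = \<rho>2 \<circ> \<rho>1 \<and>
          fixspace \<rho>1 \<inter> fixspace \<rho>2 = fixspace h \<and> mperp (fixspace \<rho>1) \<subseteq> fixspace \<rho>2 \<and>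
          (\<exists>s t. hhyperplane s \<and> fixspace \<rho>1 \<subseteq> s \<and>
                 hhyperplane t \<and> fixspace \<rho>2 \<subseteq> t \<and> W = s \<inter> t))))}"

end

theory Submission
  imports Defs
begin


lemma exhaust_5:
  fixes x :: 5
  shows "x = 0 \<or> x = 1 \<or> x = 2 \<or> x = 3 \<or> x = 4"
proof (induct x)
  case (of_int z)
  then have "0 \<le> z" "z < 5" by simp_all
  then have "z = 0 \<or> z = 1 \<or> z = 2 \<or> z = 3 \<or> z = 4" by presburger
  then show ?case by auto
qed

lemma forall_5: "(\<forall>i::5. P i) \<longleftrightarrow> P 0 \<and> P 1 \<and> P 2 \<and> P 3 \<and> P 4"
  by (metis exhaust_5)

lemma UNIV_5: "UNIV = {0, 1, 2, 3, 4::5}"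
proof -
  { fix x :: 5 have "x \<in> {0,1,2,3,4}" using exhaust_5[of x] by blast }
  thus ?thesis by blast
qed

lemma neq5: "(0::5) \<noteq> 1" "(0::5) \<noteq> 2" "(0::5) \<noteq> 3" "(0::5) \<noteq> 4"
  "(1::5) \<noteq> 2" "(1::5) \<noteq> 3" "(1::5) \<noteq> 4" "(2::5) \<noteq> 3" "(2::5) \<noteq> 4" "(3::5) \<noteq> 4"
  by simp_all


lemma sum_5: "sum f (UNIV::5 set) = f 0 + f 1 + f 2 + f 3 + f 4"
  unfolding UNIV_5 by (simp add: neq5 add.assoc)

lemma vec5_eq: "(x::real^5) = y \<longleftrightarrow> x$0 = y$0 \<and> x$1 = y$1 \<and> x$2 = y$2 \<and> x$3 = y$3 \<and> x$4 = y$4"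
  by (simp add: vec_eq_iff forall_5)

definition jf :: "real^5 \<Rightarrow> real^5" where
  "jf w = (\<chi> i. if i = 0 then - (w$i) else w$i)"

lemma mink_inner: "mink x y = x \<bullet> jf y"
  by (simp add: mink_def inner_vec_def sum_5 jf_def neq5[symmetric])

lemma jf_jf[simp]: "jf (jf x) = x"
  by (simp add: jf_def vec_eq_iff)

lemma linear_jf: "linear jf"
  by (rule linearI) (auto simp: jf_def vec_eq_iff)

lemma inj_jf: "inj jf"
  by (metis injI jf_jf)

lemma mink_sym: "mink x y = mink y x"
  by (simp add: mink_def algebra_simps)

lemma mink_add_left: "mink (x + y) z = mink x z + mink y z"
  by (simp add: mink_def algebra_simps)
lemma mink_add_right: "mink z (x + y) = mink z x + mink z y"
  by (simp add: mink_def algebra_simps)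
lemma mink_diff_left: "mink (x - y) z = mink x z - mink y z"
  by (simp add: mink_def algebra_simps)
lemma mink_diff_right: "mink z (x - y) = mink z x - mink z y"
  by (simp add: mink_def algebra_simps)
lemma mink_scale_left: "mink (c *\<^sub>R x) z = c * mink x z"
  by (simp add: mink_def algebra_simps)
lemma mink_scale_right: "mink z (c *\<^sub>R x) = c * mink z x"
  by (simp add: mink_def algebra_simps)
lemma mink_minus_left: "mink (- x) z = - mink x z"
  by (simp add: mink_def algebra_simps)
lemma mink_minus_right: "mink z (- x) = - mink z x"
  by (simp add: mink_def algebra_simps)
lemma mink_zero[simp]: "mink 0 z = 0" "mink z 0 = 0"
  by (simp_all add: mink_def)

lemmas mink_simps = mink_add_left mink_add_right mink_diff_left mink_diff_right
  mink_scale_left mink_scale_right mink_minus_left mink_minus_right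

lemma mink_sum_left: "finite A \<Longrightarrow> mink (sum f A) z = (\<Sum>a\<in>A. mink (f a) z)"
  by (induct A rule: finite_induct) (auto simp: mink_add_left)

lemma mink_nondeg: "(\<And>w. mink v w = 0) \<Longrightarrow> v = 0"
  by (metis inner_eq_zero_iff jf_jf mink_inner)

lemma mink_zero0: "v$0 = 0 \<Longrightarrow> mink v v = (v$1)^2 + (v$2)^2 + (v$3)^2 + (v$4)^2"
  by (simp add: mink_def power2_eq_square)

lemma mink_zero0_pos: "v$0 = 0 \<Longrightarrow> v \<noteq> 0 \<Longrightarrow> mink v v > 0"
proof -
  assume a: "v$0 = 0" "v \<noteq> 0"
  then have "v$1 \<noteq> 0 \<or> v$2 \<noteq> 0 \<or> v$3 \<noteq> 0 \<or> v$4 \<noteq> 0" by (auto simp: vec5_eq)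
  then show ?thesis using mink_zero0[OF a(1)]
    by (smt (verit) power2_less_0 not_sum_power2_lt_zero zero_less_power2)
qed

lemma mink_zero0_nonneg: "v$0 = 0 \<Longrightarrow> mink v v \<ge> 0"
  using mink_zero0_pos[of v] by (cases "v = 0") auto

lemma timelike_orth:
  assumes u: "mink u u < 0" and o: "mink u w = 0" and w: "w \<noteq> 0"
  shows "mink w w > 0"
proof -
  have u0: "u$0 \<noteq> 0"
  proof
    assume "u$0 = 0" then show False using mink_zero0_nonneg[of u] u by simp
  qed
  define c where "c = w$0 / u$0"
  define d where "d = w - c *\<^sub>R u"
  have d0: "d$0 = 0" using u0 by (simp add: d_def c_def)
  have dd: "mink d d = mink w w + c^2 * mink u u"
    by (simp add: d_def mink_simps o mink_sym[of w u] power2_eq_square algebra_simps)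
  show ?thesis
  proof (cases "c = 0")
    case True
    then have "d = w" by (simp add: d_def)
    then show ?thesis using mink_zero0_pos[OF d0] w by simp
  next
    case False
    then have "c^2 * mink u u < 0" using u by (simp add: mult_pos_neg)
    then show ?thesis using dd mink_zero0_nonneg[OF d0] by linarith
  qed
qed

lemma null_orth:
  assumes u: "mink u u = 0" "u \<noteq> 0" and w: "mink w w = 0" and o: "mink u w = 0"
  shows "\<exists>c. w = c *\<^sub>R u"
proof -
  have u0: "u$0 \<noteq> 0"
  proof
    assume "u$0 = 0" then show False using mink_zero0_pos[of u] u by simp
  qed
  define c where "c = w$0 / u$0"
  define d where "d = w - c *\<^sub>R u"
  have d0: "d$0 = 0" using u0 by (simp add: d_def c_def)
  have dd: "mink d d = 0"
    by (simp add: d_def mink_simps o mink_sym[of w u] u w)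
  then have "d = 0" using mink_zero0_pos[OF d0] by fastforce
  then show ?thesis by (auto simp: d_def)
qed

lemma null_timelike_nonorth:
  assumes "mink u u = 0" "u \<noteq> 0" "mink x x < 0"
  shows "mink u x \<noteq> 0"
  using timelike_orth[of x u] assms by (auto simp: mink_sym)



lemma in_mperp: "v \<in> mperp S \<longleftrightarrow> (\<forall>w\<in>S. mink v w = 0)"
  by (simp add: mperp_def)

lemma subspace_mperp: "subspace (mperp S)"
  by (auto simp: subspace_def mperp_def mink_simps)

lemma mperp_orth: "mperp S = orthogonal_comp (jf ` S)"
  by (auto simp: mperp_def orthogonal_comp_def orthogonal_def mink_inner inner_commute)

lemma mperp_anti: "A \<subseteq> B \<Longrightarrow> mperp B \<subseteq> mperp A"
  by (auto simp: mperp_def)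

lemma mperp_insert: "mperp (insert a S) = mperp {a} \<inter> mperp S"
  by (auto simp: mperp_def)

lemma mperp_span: "mperp (span S) = mperp S"
proof
  show "mperp (span S) \<subseteq> mperp S" by (rule mperp_anti) (rule span_superset)
next
  show "mperp S \<subseteq> mperp (span S)"
  proof
    fix v assume v: "v \<in> mperp S"
    have sub: "subspace {w. mink v w = 0}"
      by (auto simp: subspace_def mink_simps)
    have "S \<subseteq> {w. mink v w = 0}" using v by (auto simp: mperp_def)
    then have "span S \<subseteq> {w. mink v w = 0}" using sub by (rule span_minimal)
    then show "v \<in> mperp (span S)" by (auto simp: mperp_def)
  qed
qed

lemma dim_jf: "dim (jf ` S) = dim S"
  by (rule dim_image_eq[OF linear_jf]) (meson inj_jf inj_on_subset subset_UNIV)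

lemma dim5: "dim (UNIV :: (real^5) set) = 5"
  by simp

lemma dim_mperp:
  assumes "subspace S"
  shows "dim (mperp S) + dim S = 5"
proof -
  have s: "subspace (jf ` S)" by (rule linear_subspace_image[OF linear_jf assms])
  have "dim {y \<in> UNIV. \<forall>x \<in> jf ` S. orthogonal x y} + dim (jf ` S) = dim (UNIV :: (real^5) set)"
    by (rule dim_subspace_orthogonal_to_vectors[OF s subspace_UNIV]) simp
  moreover have "{y \<in> UNIV. \<forall>x \<in> jf ` S. orthogonal x y} = mperp S"
    by (auto simp: mperp_orth orthogonal_comp_def)
  ultimately show ?thesis by (simp add: dim_jf)
qed

lemma mperp_mperp:
  assumes "subspace S"
  shows "mperp (mperp S) = S"
proof -
  have "S \<subseteq> mperp (mperp S)" by (auto simp: mperp_def mink_sym)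
  moreover have "dim (mperp (mperp S)) = dim S"
    using dim_mperp[OF assms] dim_mperp[OF subspace_mperp, of S] by simp
  ultimately show ?thesis
    by (metis assms subspace_dim_equal subspace_mperp order_refl)
qed

lemma nondeg_decomp:
  assumes S: "subspace S" and nd: "S \<inter> mperp S \<subseteq> {0}"
  shows "\<exists>a b. a \<in> S \<and> b \<in> mperp S \<and> v = a + b"
proof -
  let ?T = "{x + y |x y. x \<in> S \<and> y \<in> mperp S}"
  have "dim ?T + dim (S \<inter> mperp S) = dim S + dim (mperp S)"
    by (rule dim_sums_Int[OF S subspace_mperp])
  moreover have "S \<inter> mperp S = {0}" using nd S subspace_0 subspace_mperp by blast
  ultimately have "dim ?T = 5" using dim_mperp[OF S] by simp
  then have "span ?T = UNIV" using dim_eq_full[of ?T] by simp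
  moreover have "subspace ?T" using subspace_sums[OF S subspace_mperp] by (simp add: set_plus_def)
  moreover have "span ?T = ?T" using calculation(2) by (simp only: span_eq_iff)
  ultimately have "?T = UNIV" by simp
  then show ?thesis by blast
qed

lemma timelike_nondeg:
  assumes "timelike_subspace S"
  shows "S \<inter> mperp S \<subseteq> {0}"
proof
  fix w assume w: "w \<in> S \<inter> mperp S"
  obtain u where u: "u \<in> S" "mink u u < 0" using assms by (auto simp: timelike_subspace_def)
  have "mink w u = 0" "mink w w = 0" using w u by (auto simp: mperp_def)
  then show "w \<in> {0}" using timelike_orth[OF u(2), of w] by (auto simp: mink_sym)
qed

lemma timelike_perp_pos:
  assumes "timelike_subspace S" "v \<in> mperp S" "v \<noteq> 0"
  shows "mink v v > 0"
proof -
  obtain u where u: "u \<in> S" "mink u u < 0" using assms by (auto simp: timelike_subspace_def)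
  have "mink u v = 0" using assms u by (auto simp: mperp_def mink_sym)
  then show ?thesis using timelike_orth[OF u(2)] assms by auto
qed

lemma hplane_decomp:
  assumes "hplane W"
  shows "\<exists>a b. a \<in> W \<and> b \<in> mperp W \<and> v = a + b"
  using assms nondeg_decomp timelike_nondeg
  by (auto simp: hplane_def timelike_subspace_def)

lemma halfturn_char:
  assumes W: "hplane W" and f: "linear f" "\<forall>v\<in>W. f v = v" "\<forall>v\<in>mperp W. f v = - v"
  shows "halfturn W = f"
  unfolding halfturn_def
proof (rule the_equality)
  show "linear f \<and> (\<forall>v\<in>W. f v = v) \<and> (\<forall>v\<in>mperp W. f v = - v)" using f by blast
next
  fix g assume g: "linear g \<and> (\<forall>v\<in>W. g v = v) \<and> (\<forall>v\<in>mperp W. g v = - v)"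
  show "g = f"
  proof
    fix v
    obtain a b where ab: "a \<in> W" "b \<in> mperp W" "v = a + b" using hplane_decomp[OF W] by blast
    have "g v = g a + g b" using g ab by (simp add: linear_add)
    also have "\<dots> = f a + f b" using g f ab by simp
    also have "\<dots> = f v" using f ab by (simp add: linear_add)
    finally show "g v = f v" .
  qed
qed



definition rf :: "real^5 \<Rightarrow> real^5 \<Rightarrow> real^5" where
  "rf n v = v - (2 * mink v n / mink n n) *\<^sub>R n"

definition isom :: "(real^5 \<Rightarrow> real^5) \<Rightarrow> bool" where
  "isom h \<longleftrightarrow> linear h \<and> (\<forall>x y. mink (h x) (h y) = mink x y)"

lemma linear_rf: "linear (rf n)"
  by (rule linearI) (auto simp: rf_def mink_simps algebra_simps add_divide_distrib)

lemma rf_self: "mink n n \<noteq> 0 \<Longrightarrow> rf n n = - n"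
  by (simp add: rf_def) (simp add: vec_eq_iff)

lemma rf_orth: "mink v n = 0 \<Longrightarrow> rf n v = v"
  by (simp add: rf_def)

lemma rf_mink: assumes "mink n n \<noteq> 0" shows "mink (rf n x) (rf n y) = mink x y"
proof -
  have "mink (rf n x) (rf n y) = mink x y - (2*mink y n/mink n n)*mink x n - (2*mink x n/mink n n)*mink n y
     + (2*mink x n/mink n n)*(2*mink y n/mink n n)*mink n n"
    by (simp add: rf_def mink_simps algebra_simps)
  also have "\<dots> = mink x y" using assms by (simp add: mink_sym[of n y] field_simps)
  finally show ?thesis .
qed

lemma rf_rf: "mink n n \<noteq> 0 \<Longrightarrow> rf n (rf n v) = v"
  by (simp add: rf_def mink_simps field_simps)

lemma isom_rf: "mink n n \<noteq> 0 \<Longrightarrow> isom (rf n)"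
  by (simp add: isom_def linear_rf rf_mink)

lemma rf_conj:
  assumes "isom h"
  shows "h (rf n v) = rf (h n) (h v)"
proof -
  have l: "linear h" and m: "\<And>x y. mink (h x) (h y) = mink x y" using assms by (auto simp: isom_def)
  show ?thesis by (simp add: rf_def m linear_diff[OF l] linear_scale[OF l])
qed

lemma rf_fix_commute:
  assumes "isom h" "h n = n"
  shows "h \<circ> rf n = rf n \<circ> h"
  using rf_conj[OF assms(1)] assms(2) by auto

lemma rf_commute:
  assumes "mink n m = 0"
  shows "rf n (rf m v) = rf m (rf n v)"
  using assms by (simp add: rf_def mink_simps mink_sym[of m n] algebra_simps)

lemma isom_comp: "isom f \<Longrightarrow> isom g \<Longrightarrow> isom (f \<circ> g)"
  by (auto simp: isom_def linear_compose)

lemma isom_inj: assumes "isom f" shows "inj f"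
proof (rule injI)
  fix x y assume e: "f x = f y"
  have l: "linear f" using assms by (simp add: isom_def)
  have "f (x - y) = 0" using e by (simp add: linear_diff[OF l])
  then have "\<And>w. mink (x - y) w = 0"
    using assms by (metis isom_def mink_zero(1))
  then show "x = y" using mink_nondeg[of "x - y"] by auto
qed

lemma isom_surj: assumes "isom f" shows "surj f"
  using linear_injective_imp_surjective[of f] assms isom_inj by (auto simp: isom_def)

lemma isom_bij: "isom f \<Longrightarrow> bij f"
  using isom_inj isom_surj bij_def by blast

lemma isom_inv: assumes "isom f" shows "isom (inv f)"
proof -
  have "linear (inv f)" using assms isom_inj inj_linear_imp_inv_linear by (auto simp: isom_def)
  moreover have "mink (inv f x) (inv f y) = mink x y" for x y
  proof -
    have "mink (inv f x) (inv f y) = mink (f (inv f x)) (f (inv f y))"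
      using assms by (simp add: isom_def)
    also have "\<dots> = mink x y" using isom_surj[OF assms] by (simp add: surj_f_inv_f)
    finally show ?thesis .
  qed
  ultimately show ?thesis by (simp add: isom_def)
qed

lemma span2: "v \<in> span {a, b} \<longleftrightarrow> (\<exists>x y. v = x *\<^sub>R a + y *\<^sub>R b)"
proof
  assume "v \<in> span {a, b}"
  then obtain k where "v - k *\<^sub>R a \<in> span {b}" by (auto simp: span_insert)
  then obtain l where "v - k *\<^sub>R a = l *\<^sub>R b" by (auto simp: span_singleton)
  then have "v = k *\<^sub>R a + l *\<^sub>R b" by (simp add: algebra_simps)
  then show "\<exists>x y. v = x *\<^sub>R a + y *\<^sub>R b" by blast
next
  assume "\<exists>x y. v = x *\<^sub>R a + y *\<^sub>R b"
  then obtain x y where "v = x *\<^sub>R a + y *\<^sub>R b" by blast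
  moreover have "a \<in> span {a,b}" "b \<in> span {a,b}" by (simp_all add: span_base)
  ultimately show "v \<in> span {a, b}" by (simp add: span_add span_scale)
qed

lemma span1: "v \<in> span {a} \<longleftrightarrow> (\<exists>x. v = x *\<^sub>R a)"
  by (auto simp: span_singleton)



definition e0 :: "real^5" where "e0 = (\<chi> i. if i = 0 then 1 else 0)"

lemma mink_e0: "mink e0 e0 = -1"
  by (simp add: e0_def mink_def neq5[symmetric])

lemma nonzero_of_dim:
  fixes Q :: "(real^5) set"
  assumes "dim Q > 0" shows "\<exists>n\<in>Q. n \<noteq> 0"
proof (rule ccontr)
  assume "\<not> ?thesis" then have "Q \<subseteq> {0}" by auto
  then have "dim Q \<le> dim {0::real^5}" using dim_subset[of Q "{0::real^5}"] by blast
  moreover have "dim {0::real^5} = 0" by simp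
  ultimately show False using assms by linarith
qed

lemma posdef_perp_timelike:
  assumes S: "subspace S" and pd: "\<forall>v\<in>S. v \<noteq> 0 \<longrightarrow> mink v v > 0"
  shows "timelike_subspace (mperp S)"
proof -
  have nd: "S \<inter> mperp S \<subseteq> {0}"
  proof
    fix v assume "v \<in> S \<inter> mperp S"
    then have "v \<in> S" "mink v v = 0" by (auto simp: mperp_def)
    then show "v \<in> {0}" using pd by fastforce
  qed
  obtain a b where ab: "a \<in> S" "b \<in> mperp S" "e0 = a + b" using nondeg_decomp[OF S nd] by blast
  have "mink a b = 0" using ab by (auto simp: mperp_def mink_sym)
  moreover have "mink e0 e0 = mink a a + mink a b + mink b a + mink b b" unfolding ab(3) by (simp add: mink_simps algebra_simps)
  moreover have "mink b a = mink a b" by (rule mink_sym)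
  ultimately have "-1 = mink a a + mink b b" using mink_e0 by linarith
  moreover have "mink a a \<ge> 0" using pd ab by (cases "a = 0") auto
  ultimately have "mink b b < 0" by linarith
  then show ?thesis using ab(2) subspace_mperp by (auto simp: timelike_subspace_def)
qed

lemma indep2:
  assumes "mink n1 n1 > 0" "mink n2 n2 > 0" "mink n1 n2 = 0"
  shows "independent {n1, n2}" "n1 \<noteq> n2"
proof -
  show ne: "n1 \<noteq> n2" using assms by auto
  have n1: "n1 \<noteq> 0" using assms by auto
  have "n1 \<notin> span {n2}"
  proof
    assume "n1 \<in> span {n2}" then obtain x where x: "n1 = x *\<^sub>R n2" by (auto simp: span1)
    then have "mink n1 n2 = x * mink n2 n2" by (simp add: mink_simps)
    then have "x = 0" using assms by simp
    then show False using x assms by simp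
  qed
  moreover have "n2 \<noteq> 0" using assms by auto
  ultimately show "independent {n1, n2}" using n1 ne
    by (simp add: independent_insert)
qed

lemma span2_posdef:
  assumes "mink n1 n1 > 0" "mink n2 n2 > 0" "mink n1 n2 = 0"
  shows "\<forall>v\<in>span {n1,n2}. v \<noteq> 0 \<longrightarrow> mink v v > 0"
proof (intro ballI impI)
  fix v assume "v \<in> span {n1, n2}" "v \<noteq> 0"
  then obtain x y where v: "v = x *\<^sub>R n1 + y *\<^sub>R n2" by (auto simp: span2)
  have o2: "mink n2 n1 = 0" using assms(3) mink_sym by metis
  have mm: "mink v v = x^2 * mink n1 n1 + y^2 * mink n2 n2"
    using assms(3) o2 by (simp add: v mink_simps power2_eq_square algebra_simps)
  have p1: "x^2 * mink n1 n1 \<ge> 0" "y^2 * mink n2 n2 \<ge> 0" using assms by simp_all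
  have "x \<noteq> 0 \<or> y \<noteq> 0" using \<open>v \<noteq> 0\<close> v by auto
  then have "x^2 * mink n1 n1 > 0 \<or> y^2 * mink n2 n2 > 0" using assms by auto
  then show "mink v v > 0" unfolding mm using p1 by linarith
qed

lemma rf2_props:
  assumes a: "mink n1 n1 > 0" "mink n2 n2 > 0" "mink n1 n2 = 0"
  shows "\<forall>v\<in>mperp {n1, n2}. (rf n1 \<circ> rf n2) v = v"
    "\<forall>v\<in>mperp (mperp {n1, n2}). (rf n1 \<circ> rf n2) v = - v"
proof -
  let ?S = "span {n1, n2}"
  show "\<forall>v\<in>mperp {n1, n2}. (rf n1 \<circ> rf n2) v = v"
    by (auto simp: mperp_def rf_orth)
  show "\<forall>v\<in>mperp (mperp {n1, n2}). (rf n1 \<circ> rf n2) v = - v"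
  proof
    fix v assume "v \<in> mperp (mperp {n1, n2})"
    then have "v \<in> ?S" using mperp_mperp[of ?S] by (simp add: mperp_span)
    then obtain x y where v: "v = x *\<^sub>R n1 + y *\<^sub>R n2" by (auto simp: span2)
    have o2: "mink n2 n1 = 0" using a(3) mink_sym by metis
    have c1: "2 * mink v n2 / mink n2 n2 = 2 * y" using a o2 by (simp add: v mink_simps)
    have "rf n2 v = x *\<^sub>R n1 - y *\<^sub>R n2"
      unfolding rf_def c1 by (simp add: v vec_eq_iff algebra_simps)
    moreover have c2: "2 * mink (x *\<^sub>R n1 - y *\<^sub>R n2) n1 / mink n1 n1 = 2 * x"
      using a o2 by (simp add: mink_simps)
    moreover have "rf n1 (x *\<^sub>R n1 - y *\<^sub>R n2) = - v"
      unfolding rf_def c2 by (simp add: v vec_eq_iff algebra_simps)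
    ultimately show "(rf n1 \<circ> rf n2) v = - v" by simp
  qed
qed

lemma ht2:
  assumes a: "mink n1 n1 > 0" "mink n2 n2 > 0" "mink n1 n2 = 0"
  shows "hplane (mperp {n1,n2})" "halfturn (mperp{n1,n2}) = rf n1 \<circ> rf n2"
proof -
  let ?S = "span {n1, n2}"
  have tl: "timelike_subspace (mperp ?S)"
    by (rule posdef_perp_timelike[OF subspace_span span2_posdef[OF a]])
  have dS: "dim ?S = 2" using indep2[OF a] by (simp add: dim_eq_card_independent)
  have "dim (mperp ?S) = 3" using dim_mperp[of ?S] dS by simp
  then show hp: "hplane (mperp {n1,n2})" using tl by (simp add: hplane_def mperp_span)
  show "halfturn (mperp{n1,n2}) = rf n1 \<circ> rf n2"
    using halfturn_char[OF hp linear_compose[OF linear_rf linear_rf] rf2_props[OF a]] .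
qed

lemma hyp1:
  assumes a: "mink n n > 0"
  shows "hhyperplane (mperp {n})"
proof -
  let ?S = "span {n}"
  have pd: "\<forall>v\<in>?S. v \<noteq> 0 \<longrightarrow> mink v v > 0"
  proof (intro ballI impI)
    fix v assume "v \<in> ?S" "v \<noteq> 0"
    then obtain x where v: "v = x *\<^sub>R n" by (auto simp: span1)
    then have "x \<noteq> 0" using \<open>v \<noteq> 0\<close> by auto
    then have "x * x > 0" by (cases "x > 0") (auto simp: mult_neg_neg)
    moreover have "mink v v = (x * x) * mink n n" by (simp add: v mink_simps)
    ultimately show "mink v v > 0" using a by simp
  qed
  have tl: "timelike_subspace (mperp ?S)" by (rule posdef_perp_timelike[OF subspace_span pd])
  have "n \<noteq> 0" using a by auto
  then have dS: "dim ?S = 1" by simp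
  have "dim (mperp ?S) = 4" using dim_mperp[of ?S] dS by simp
  then show ?thesis using tl by (simp add: hhyperplane_def mperp_span)
qed

lemma hyp_normal:
  assumes "hhyperplane s"
  shows "\<exists>n. mink n n > 0 \<and> s = mperp {n}"
proof -
  have ss: "subspace s" and ds: "dim s = 4" and tl: "timelike_subspace s"
    using assms by (auto simp: hhyperplane_def timelike_subspace_def)
  let ?Q = "mperp s"
  have dQ: "dim ?Q = 1" using dim_mperp[OF ss] ds by simp
  obtain n where n: "n \<in> ?Q" "n \<noteq> 0" using nonzero_of_dim[of ?Q] dQ by auto
  have "span {n} \<subseteq> ?Q" using n subspace_mperp by (simp add: span_minimal)
  moreover have "dim (span {n}) \<ge> dim ?Q" using n dQ by simp
  ultimately have "span {n} = ?Q" using subspace_dim_equal subspace_span subspace_mperp by blast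
  then have "s = mperp {n}" using mperp_mperp[OF ss] by (metis mperp_span)
  moreover have "mink n n > 0" using timelike_perp_pos[OF tl n] .
  ultimately show ?thesis by blast
qed

lemma q2_basis:
  assumes Q: "subspace Q" "dim Q = 2" and pd: "\<forall>v\<in>Q. v \<noteq> 0 \<longrightarrow> mink v v > 0"
    and n: "n \<in> Q" "n \<noteq> 0"
  shows "\<exists>m\<in>Q. mink n m = 0 \<and> mink m m = mink n n \<and> span {n, m} = Q"
proof -
  have N: "mink n n > 0" using pd n by auto
  have "\<not> Q \<subseteq> span {n}"
  proof
    assume "Q \<subseteq> span {n}"
    then have "dim Q \<le> dim (span {n})" by (rule dim_subset)
    then show False using Q n by simp
  qed
  then obtain q where q: "q \<in> Q" "q \<notin> span {n}" by blast
  define m0 where "m0 = q - (mink q n / mink n n) *\<^sub>R n"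
  have m0Q: "m0 \<in> Q" using q n Q by (simp add: m0_def subspace_diff subspace_scale)
  have m0z: "m0 \<noteq> 0"
  proof
    assume "m0 = 0" then have "q = (mink q n / mink n n) *\<^sub>R n" by (simp add: m0_def)
    then show False using q(2) by (metis span1)
  qed
  have M0: "mink m0 m0 > 0" using pd m0Q m0z by auto
  have o0: "mink n m0 = 0" using N by (simp add: m0_def mink_simps mink_sym[of n q])
  define m where "m = sqrt (mink n n / mink m0 m0) *\<^sub>R m0"
  have mQ: "m \<in> Q" using m0Q Q by (simp add: m_def subspace_scale)
  have o: "mink n m = 0" by (simp add: m_def mink_simps o0)
  have mm: "mink m m = mink n n"
  proof -
    have z: "sqrt (mink n n / mink m0 m0) * sqrt (mink n n / mink m0 m0) = mink n n / mink m0 m0"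
      using N M0 by simp
    have "mink m m = (sqrt (mink n n / mink m0 m0) * sqrt (mink n n / mink m0 m0)) * mink m0 m0"
      by (simp only: m_def mink_simps mult.assoc)
    also have "\<dots> = mink n n" using M0 by (simp only: z) simp
    finally show ?thesis .
  qed
  have "span {n, m} \<subseteq> Q" using n mQ Q by (simp add: span_minimal)
  moreover have "dim (span {n, m}) = 2"
    using indep2[of n m] N mm o by (simp add: dim_eq_card_independent)
  ultimately have "span {n, m} = Q" using Q subspace_dim_equal subspace_span by (metis order_refl)
  then show ?thesis using mQ o mm by blast
qed

lemma hplane_normals:
  assumes "hplane W"
  shows "\<exists>n1 n2. mink n1 n1 > 0 \<and> mink n2 n2 > 0 \<and> mink n1 n2 = 0 \<and> W = mperp {n1, n2}"
proof -
  have ss: "subspace W" and ds: "dim W = 3" and tl: "timelike_subspace W"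
    using assms by (auto simp: hplane_def timelike_subspace_def)
  let ?Q = "mperp W"
  have dQ: "dim ?Q = 2" using dim_mperp[OF ss] ds by simp
  have pd: "\<forall>v\<in>?Q. v \<noteq> 0 \<longrightarrow> mink v v > 0" using timelike_perp_pos[OF tl] by blast
  obtain n where n: "n \<in> ?Q" "n \<noteq> 0" using nonzero_of_dim[of ?Q] dQ by auto
  obtain m where m: "m \<in> ?Q" "mink n m = 0" "mink m m = mink n n" "span {n, m} = ?Q"
    using q2_basis[OF subspace_mperp dQ pd n] by blast
  have "W = mperp {n, m}" using mperp_mperp[OF ss] m(4) by (metis mperp_span)
  moreover have "mink n n > 0" using pd n by auto
  ultimately show ?thesis using m(2,3) by (intro exI[of _ n] exI[of _ m]) simp
qed

lemma halfturn_props: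
  assumes "hplane W"
  shows "isom (halfturn W)" "halfturn W \<circ> halfturn W = id"
    "\<forall>v\<in>W. halfturn W v = v" "\<forall>v\<in>mperp W. halfturn W v = - v"
proof -
  obtain n1 n2 where a: "mink n1 n1 > 0" "mink n2 n2 > 0" "mink n1 n2 = 0" "W = mperp {n1, n2}"
    using hplane_normals[OF assms] by blast
  have h: "halfturn W = rf n1 \<circ> rf n2" using ht2[OF a(1-3)] a(4) by simp
  show "isom (halfturn W)" using h a by (simp add: isom_comp isom_rf)
  show "halfturn W \<circ> halfturn W = id"
    unfolding h using a(1,2) by (auto simp: rf_commute[OF a(3)] rf_rf)
  show "\<forall>v\<in>W. halfturn W v = v" using rf2_props[OF a(1-3)] a(4) h by simp
  show "\<forall>v\<in>mperp W. halfturn W v = - v" using rf2_props[OF a(1-3)] a(4) h by simp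
qed



lemma mink_2d:
  assumes o: "mink n m = 0" and mm: "mink m m = mink n n"
  shows "mink (x *\<^sub>R n + y *\<^sub>R m) (z *\<^sub>R n + w *\<^sub>R m) = (x*z + y*w) * mink n n"
proof -
  have o2: "mink m n = 0" using o mink_sym by metis
  show ?thesis using o o2 mm by (simp add: mink_simps algebra_simps)
qed

lemma rf_2d:
  assumes o: "mink n m = 0" and mm: "mink m m = mink n n" and N: "mink n n > 0"
    and pq: "p*p + q*q > 0"
  shows "rf (p *\<^sub>R n + q *\<^sub>R m) (x *\<^sub>R n + y *\<^sub>R m) =
     (x - 2*(x*p+y*q)*p/(p*p+q*q)) *\<^sub>R n + (y - 2*(x*p+y*q)*q/(p*p+q*q)) *\<^sub>R m"
proof -
  have c: "2 * mink (x *\<^sub>R n + y *\<^sub>R m) (p *\<^sub>R n + q *\<^sub>R m) / mink (p *\<^sub>R n + q *\<^sub>R m) (p *\<^sub>R n + q *\<^sub>R m)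
      = 2*(x*p+y*q)/(p*p+q*q)"
    using N pq by (simp add: mink_2d[OF o mm])
  show ?thesis unfolding rf_def c
    by (simp add: vec_eq_iff algebra_simps add_divide_distrib diff_divide_distrib)
qed

lemma lin_eq_decomp:
  assumes f: "linear f" and g: "linear g"
    and D: "\<And>v. \<exists>p\<in>A. \<exists>x y. v = p + x *\<^sub>R n + y *\<^sub>R m"
    and eA: "\<forall>v\<in>A. f v = g v" and en: "f n = g n" and em: "f m = g m"
  shows "f = g"
proof
  fix v
  obtain p x y where p: "p \<in> A" "v = p + x *\<^sub>R n + y *\<^sub>R m" using D by blast
  have "f v = f p + x *\<^sub>R f n + y *\<^sub>R f m" using f by (simp add: p linear_add linear_scale)
  also have "\<dots> = g p + x *\<^sub>R g n + y *\<^sub>R g m" using eA p en em by simp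
  also have "\<dots> = g v" using g by (simp add: p linear_add linear_scale)
  finally show "f v = g v" .
qed

lemma hplane_decomp2:
  assumes "hplane P" "span {n, m} = mperp P"
  shows "\<exists>p\<in>P. \<exists>x y. v = p + x *\<^sub>R n + y *\<^sub>R m"
proof -
  obtain p q where "p \<in> P" "q \<in> mperp P" "v = p + q" using hplane_decomp[OF assms(1)] by blast
  moreover then obtain x y where "q = x *\<^sub>R n + y *\<^sub>R m" using assms(2) span2 by (metis)
  ultimately show ?thesis by (metis add.assoc)
qed

lemma orth_pairs:
  fixes a b c d :: real
  assumes e1: "a*a + b*b = 1" and e2: "c*c + d*d = 1" and e3: "a*c + b*d = 0"
  shows "(c = -b \<and> d = a) \<or> (c = b \<and> d = -a)"
proof -
  have "(a*d - b*c)^2 = (a*a + b*b)*(c*c + d*d) - (a*c + b*d)^2" by (simp add: power2_eq_square algebra_simps)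
  then have sq: "(a*d - b*c)^2 = 1" using e1 e2 e3 by simp
  have s1: "(c + b)^2 + (d - a)^2 = 2 - 2*(a*d - b*c)"
    using e1 e2 by (simp add: power2_eq_square algebra_simps)
  have s2: "(c - b)^2 + (d + a)^2 = 2 + 2*(a*d - b*c)"
    using e1 e2 by (simp add: power2_eq_square algebra_simps)
  from sq have "a*d - b*c = 1 \<or> a*d - b*c = -1"
    by (metis power2_eq_1_iff)
  then show ?thesis
  proof
    assume "a*d - b*c = 1"
    then have "(c + b)^2 + (d - a)^2 = 0" using s1 by simp
    then have "c + b = 0" "d - a = 0" by (simp_all add: sum_power2_eq_zero_iff)
    then show ?thesis by auto
  next
    assume "a*d - b*c = -1"
    then have "(c - b)^2 + (d + a)^2 = 0" using s2 by simp
    then have "c - b = 0" "d + a = 0" by (simp_all add: sum_power2_eq_zero_iff)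
    then show ?thesis by auto
  qed
qed

lemma core1:
  assumes iso: "isom \<rho>" and P: "hplane P" and fx: "fixspace \<rho> = P"
    and nQ: "n \<in> mperp P" and N: "mink n n > 0"
  shows "\<exists>n'. n' \<in> mperp P \<and> mink n' n' > 0 \<and> \<rho> \<circ> rf n = rf n'"
proof -
  have lin: "linear \<rho>" and mi: "\<And>x y. mink (\<rho> x) (\<rho> y) = mink x y" using iso by (auto simp: isom_def)
  have sP: "subspace P" and dP: "dim P = 3" and tl: "timelike_subspace P"
    using P by (auto simp: hplane_def timelike_subspace_def)
  let ?Q = "mperp P"
  have dQ: "dim ?Q = 2" using dim_mperp[OF sP] dP by simp
  have pd: "\<forall>v\<in>?Q. v \<noteq> 0 \<longrightarrow> mink v v > 0" using timelike_perp_pos[OF tl] by blast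
  have n0: "n \<noteq> 0" using N by auto
  have PQ0: "\<And>v. v \<in> P \<Longrightarrow> v \<in> ?Q \<Longrightarrow> v = 0" using timelike_nondeg[OF tl] by blast
  obtain m where m: "m \<in> ?Q" "mink n m = 0" "mink m m = mink n n" "span {n, m} = ?Q"
    using q2_basis[OF subspace_mperp dQ pd nQ n0] by blast
  have fixP: "\<And>w. w \<in> P \<Longrightarrow> \<rho> w = w" using fx by (auto simp: fixspace_def)
  have pres: "\<And>v. v \<in> ?Q \<Longrightarrow> \<rho> v \<in> ?Q"
  proof -
    fix v assume v: "v \<in> ?Q"
    show "\<rho> v \<in> ?Q" unfolding in_mperp
    proof
      fix w assume w: "w \<in> P"
      have "mink (\<rho> v) w = mink (\<rho> v) (\<rho> w)" using fixP[OF w] by simp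
      also have "\<dots> = mink v w" by (rule mi)
      also have "\<dots> = 0" using v w by (auto simp: mperp_def)
      finally show "mink (\<rho> v) w = 0" .
    qed
  qed
  obtain a b where ab: "\<rho> n = a *\<^sub>R n + b *\<^sub>R m" using pres[OF nQ] m(4) span2 by metis
  obtain c d where cd: "\<rho> m = c *\<^sub>R n + d *\<^sub>R m" using pres[OF m(1)] m(4) span2 by metis
  have e1: "a*a + b*b = 1"
  proof -
    have "mink (\<rho> n) (\<rho> n) = (a*a+b*b) * mink n n" unfolding ab by (rule mink_2d[OF m(2,3)])
    then show ?thesis using mi[of n n] N by simp
  qed
  have e2: "c*c + d*d = 1"
  proof -
    have "mink (\<rho> m) (\<rho> m) = (c*c+d*d) * mink n n" unfolding cd by (rule mink_2d[OF m(2,3)])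
    then show ?thesis using mi[of m m] N m(3) by simp
  qed
  have e3: "a*c + b*d = 0"
  proof -
    have "mink (\<rho> n) (\<rho> m) = (a*c+b*d) * mink n n" unfolding ab cd by (rule mink_2d[OF m(2,3)])
    then show ?thesis using mi[of n m] N m(2) by simp
  qed
  have proper: "c = -b \<and> d = a"
  proof (rule ccontr)
    assume "\<not> (c = -b \<and> d = a)"
    then have cd2: "c = b" "d = -a" using orth_pairs[OF e1 e2 e3] by auto
    show False
    proof (cases "a = -1")
      case True
      then have "b = 0" using e1 by simp
      then have "\<rho> m = m" using cd cd2 True by simp
      then have "m \<in> P" using fx by (auto simp: fixspace_def)
      then have "m = 0" using PQ0 m(1) by blast
      then show False using m(3) N by simp
    next
      case False
      define v where "v = (1+a) *\<^sub>R n + b *\<^sub>R m"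
      have "\<rho> v = (1+a) *\<^sub>R \<rho> n + b *\<^sub>R \<rho> m" using lin by (simp add: v_def linear_add linear_scale)
      also have "\<dots> = ((1+a)*a + b*b) *\<^sub>R n + ((1+a)*b - b*a) *\<^sub>R m"
        by (simp add: ab cd cd2 algebra_simps)
      also have "\<dots> = v" using e1 by (simp add: v_def algebra_simps)
      finally have "v \<in> P" using fx by (auto simp: fixspace_def)
      moreover have "v \<in> ?Q" using nQ m(1) by (simp add: v_def subspace_mperp subspace_add subspace_scale)
      ultimately have v0: "v = 0" using PQ0 by blast
      have vv: "mink v v = ((1+a)*(1+a) + b*b) * mink n n"
        unfolding v_def by (rule mink_2d[OF m(2,3)])
      have "1 + a \<noteq> 0" using False by simp
      then have "(1+a)*(1+a) > 0" by (cases "1+a > 0") (auto simp: mult_neg_neg)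
      then have "((1+a)*(1+a) + b*b) * mink n n > 0" using N
        by (simp add: add_pos_nonneg)
      moreover have "mink v v = 0" using v0 by simp
      ultimately show False using vv by linarith
    qed
  qed
  have a1: "a \<noteq> 1"
  proof
    assume "a = 1"
    then have "b = 0" using e1 by simp
    then have "\<rho> n = n" using ab \<open>a = 1\<close> by simp
    then have "n \<in> P" using fx by (auto simp: fixspace_def)
    then show False using PQ0 nQ n0 by blast
  qed
  define n' where "n' = b *\<^sub>R n + (1-a) *\<^sub>R m"
  have den: "b*b + (1-a)*(1-a) = 2*(1-a)" using e1 by (simp add: algebra_simps)
  have "(1-a)*(1-a) > 0" using a1 by (cases "1-a > 0") (auto simp: mult_neg_neg)
  then have den0: "b*b + (1-a)*(1-a) > 0" by (simp add: add_nonneg_pos)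
  have n'Q: "n' \<in> ?Q" using nQ m(1) by (simp add: n'_def subspace_mperp subspace_add subspace_scale)
  have N': "mink n' n' > 0" unfolding n'_def mink_2d[OF m(2,3)] using den0 N by simp
  have "\<rho> \<circ> rf n = rf n'"
  proof (rule lin_eq_decomp[OF _ linear_rf hplane_decomp2[OF P m(4)]])
    show "linear (\<rho> \<circ> rf n)" by (simp add: lin linear_compose linear_rf)
    show "\<forall>v\<in>P. (\<rho> \<circ> rf n) v = rf n' v"
    proof
      fix v assume v: "v \<in> P"
      have "mink v n = 0" "mink v n' = 0" using v nQ n'Q by (auto simp: mperp_def mink_sym)
      then show "(\<rho> \<circ> rf n) v = rf n' v" using fixP[OF v] by (simp add: rf_orth)
    qed
    have "(\<rho> \<circ> rf n) n = (-a) *\<^sub>R n + (-b) *\<^sub>R m" using N ab by (simp add: rf_self linear_neg[OF lin])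
    moreover have "rf n' n = (-a) *\<^sub>R n + (-b) *\<^sub>R m"
    proof -
      have "rf n' n = rf (b *\<^sub>R n + (1-a) *\<^sub>R m) (1 *\<^sub>R n + 0 *\<^sub>R m)" by (simp add: n'_def)
      also have "\<dots> = (1 - 2*(1*b+0*(1-a))*b/(b*b+(1-a)*(1-a))) *\<^sub>R n
          + (0 - 2*(1*b+0*(1-a))*(1-a)/(b*b+(1-a)*(1-a))) *\<^sub>R m"
        by (rule rf_2d[OF m(2,3) N den0])
      also have "1 - 2*(1*b+0*(1-a))*b/(b*b+(1-a)*(1-a)) = -a"
        unfolding den using a1 e1 by (simp add: field_simps)
      also have "0 - 2*(1*b+0*(1-a))*(1-a)/(b*b+(1-a)*(1-a)) = -b"
        unfolding den using a1 by (simp add: field_simps)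
      finally show ?thesis .
    qed
    ultimately show "(\<rho> \<circ> rf n) n = rf n' n" by simp
    have "(\<rho> \<circ> rf n) m = (-b) *\<^sub>R n + a *\<^sub>R m"
      using m(2) proper cd by (simp add: rf_orth mink_sym[of m n])
    moreover have "rf n' m = (-b) *\<^sub>R n + a *\<^sub>R m"
    proof -
      have "rf n' m = rf (b *\<^sub>R n + (1-a) *\<^sub>R m) (0 *\<^sub>R n + 1 *\<^sub>R m)" by (simp add: n'_def)
      also have "\<dots> = (0 - 2*(0*b+1*(1-a))*b/(b*b+(1-a)*(1-a))) *\<^sub>R n
          + (1 - 2*(0*b+1*(1-a))*(1-a)/(b*b+(1-a)*(1-a))) *\<^sub>R m"
        by (rule rf_2d[OF m(2,3) N den0])
      also have "0 - 2*(0*b+1*(1-a))*b/(b*b+(1-a)*(1-a)) = -b"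
        unfolding den using a1 by (simp add: field_simps)
      also have "1 - 2*(0*b+1*(1-a))*(1-a)/(b*b+(1-a)*(1-a)) = a"
        unfolding den using a1 by (simp add: field_simps)
      finally show ?thesis .
    qed
    ultimately show "(\<rho> \<circ> rf n) m = rf n' m" by simp
  qed
  then show ?thesis using n'Q N' by blast
qed



lemma sym_from:
  assumes "isom \<rho>" "\<rho> m0 = n"
  shows "rf n \<circ> \<rho> = \<rho> \<circ> rf m0"
  using rf_conj[OF assms(1)] assms(2) by auto

lemma inv_pre:
  assumes "isom \<rho>" shows "\<rho> (inv \<rho> n) = n"
  using isom_surj[OF assms] by (simp add: surj_f_inv_f)

lemma core1_sym:
  assumes iso: "isom \<rho>" and P: "hplane P" and fx: "fixspace \<rho> = P"
    and nQ: "n \<in> mperp P" and N: "mink n n > 0"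
  shows "\<exists>n'. n' \<in> mperp P \<and> mink n' n' > 0 \<and> rf n \<circ> \<rho> = rf n'"
proof -
  define m0 where "m0 = inv \<rho> n"
  have r: "\<rho> m0 = n" using inv_pre[OF iso] by (simp add: m0_def)
  have mi: "\<And>x y. mink (\<rho> x) (\<rho> y) = mink x y" using iso by (auto simp: isom_def)
  have fixP: "\<And>w. w \<in> P \<Longrightarrow> \<rho> w = w" using fx by (auto simp: fixspace_def)
  have "m0 \<in> mperp P" unfolding in_mperp
  proof
    fix w assume w: "w \<in> P"
    have "mink m0 w = mink (\<rho> m0) (\<rho> w)" by (simp add: mi)
    also have "\<dots> = mink n w" using r fixP[OF w] by simp
    also have "\<dots> = 0" using nQ w by (auto simp: mperp_def)
    finally show "mink m0 w = 0" .
  qed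
  moreover have "mink m0 m0 > 0" using N mi[of m0 m0] r by simp
  ultimately obtain n' where "n' \<in> mperp P" "mink n' n' > 0" "\<rho> \<circ> rf m0 = rf n'"
    using core1[OF iso P fx] by blast
  then show ?thesis using sym_from[OF iso r] by metis
qed

lemma combine1:
  assumes a: "mink a a > 0" "mink b b > 0" "mink a b = 0"
    and a': "mink a' a' > 0" "mink b' b' > 0" "mink a' b' = 0"
    and e: "\<gamma> \<circ> (rf a \<circ> rf b) = rf a' \<circ> rf b'"
  shows "\<gamma> = halfturn (mperp {a', b'}) \<circ> halfturn (mperp {a, b})"
proof
  fix v
  have "(halfturn (mperp {a', b'}) \<circ> halfturn (mperp {a, b})) v = rf a' (rf b' (rf a (rf b v)))"
    using ht2(2)[OF a] ht2(2)[OF a'] by simp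
  also have "\<dots> = \<gamma> (rf a (rf b (rf a (rf b v))))" using fun_cong[OF e, of "rf a (rf b v)"] by simp
  also have "rf a (rf b (rf a (rf b v))) = v"
    using a by (simp add: rf_commute[OF a(3), of v] rf_rf)
  finally show "\<gamma> v = (halfturn (mperp {a', b'}) \<circ> halfturn (mperp {a, b})) v" by simp
qed

lemma combine2:
  assumes a: "mink a a > 0" "mink b b > 0" "mink a b = 0"
    and a': "mink a' a' > 0" "mink b' b' > 0" "mink a' b' = 0"
    and e: "(rf a \<circ> rf b) \<circ> \<gamma> = rf a' \<circ> rf b'"
  shows "\<gamma> = halfturn (mperp {a, b}) \<circ> halfturn (mperp {a', b'})"
proof
  fix v
  have "(halfturn (mperp {a, b}) \<circ> halfturn (mperp {a', b'})) v = rf a (rf b (rf a' (rf b' v)))"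
    using ht2(2)[OF a] ht2(2)[OF a'] by simp
  also have "\<dots> = rf a (rf b (rf a (rf b (\<gamma> v))))" using fun_cong[OF e, of v] by simp
  also have "\<dots> = \<gamma> v"
    using a by (simp add: rf_commute[OF a(3), of "\<gamma> v"] rf_rf)
  finally show "\<gamma> v = (halfturn (mperp {a, b}) \<circ> halfturn (mperp {a', b'})) v" by simp
qed

lemma orient_isom_isom: "orient_isom g \<Longrightarrow> isom g"
  by (simp add: orient_isom_def isom_def)

lemma in_own_perp: "n \<in> mperp (mperp {n})"
  by (simp add: mperp_def mink_sym)

lemma mperp2: "mperp {a} \<inter> mperp {b} = mperp {a, b}"
  by (metis mperp_insert)

lemma caseI:
  assumes g: "elliptic_I \<gamma>" and s: "hhyperplane s" "fixspace \<gamma> \<subseteq> s"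
    and t: "hhyperplane t" "hyp_orth t (fixspace \<gamma>)" and k: "k = s \<inter> t"
  shows "\<exists>k1. hplane k1 \<and> (\<exists>s t. hhyperplane s \<and> fixspace \<gamma> \<subseteq> s \<and>
          hhyperplane t \<and> hyp_orth t (fixspace \<gamma>) \<and> k1 = s \<inter> t) \<and> \<gamma> = halfturn k1 \<circ> halfturn k"
    "\<exists>k2. hplane k2 \<and> (\<exists>s t. hhyperplane s \<and> fixspace \<gamma> \<subseteq> s \<and>
          hhyperplane t \<and> hyp_orth t (fixspace \<gamma>) \<and> k2 = s \<inter> t) \<and> \<gamma> = halfturn k \<circ> halfturn k2"
proof -
  let ?P = "fixspace \<gamma>"
  have P: "hplane ?P" and iso: "isom \<gamma>" using g
    by (auto simp: elliptic_I_def elliptic_def orient_isom_isom)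
  obtain ns where ns: "mink ns ns > 0" "s = mperp {ns}" using hyp_normal[OF s(1)] by blast
  obtain nt where nt: "mink nt nt > 0" "t = mperp {nt}" using hyp_normal[OF t(1)] by blast
  have nsP: "ns \<in> mperp ?P" using s(2) ns(2) by (auto simp: mperp_def mink_sym)
  have ntP: "nt \<in> ?P" using t(2) nt(2) in_own_perp[of nt] by (auto simp: hyp_orth_def)
  have o: "mink ns nt = 0" using nsP ntP by (auto simp: mperp_def)
  have gnt: "\<gamma> nt = nt" using ntP by (simp add: fixspace_def)
  have comm: "\<gamma> \<circ> rf nt = rf nt \<circ> \<gamma>" by (rule rf_fix_commute[OF iso gnt])
  have kk: "k = mperp {ns, nt}" using k ns(2) nt(2) mperp2 by simp
  obtain n1 where n1: "n1 \<in> mperp ?P" "mink n1 n1 > 0" "\<gamma> \<circ> rf ns = rf n1"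
    using core1[OF iso P refl nsP ns(1)] by blast
  obtain n2 where n2: "n2 \<in> mperp ?P" "mink n2 n2 > 0" "rf ns \<circ> \<gamma> = rf n2"
    using core1_sym[OF iso P refl nsP ns(1)] by blast
  have o1: "mink n1 nt = 0" using n1(1) ntP by (auto simp: mperp_def)
  have o2: "mink n2 nt = 0" using n2(1) ntP by (auto simp: mperp_def)
  have e1: "\<gamma> \<circ> (rf ns \<circ> rf nt) = rf n1 \<circ> rf nt" using n1(3) by (metis comp_assoc)
  have e2: "(rf ns \<circ> rf nt) \<circ> \<gamma> = rf n2 \<circ> rf nt" using n2(3) comm by (metis comp_assoc)
  have S1: "?P \<subseteq> mperp {n1}" using n1(1) by (auto simp: mperp_def mink_sym)
  have S2: "?P \<subseteq> mperp {n2}" using n2(1) by (auto simp: mperp_def mink_sym)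
  show "\<exists>k1. hplane k1 \<and> (\<exists>s t. hhyperplane s \<and> fixspace \<gamma> \<subseteq> s \<and>
          hhyperplane t \<and> hyp_orth t (fixspace \<gamma>) \<and> k1 = s \<inter> t) \<and> \<gamma> = halfturn k1 \<circ> halfturn k"
    apply (rule exI[of _ "mperp {n1, nt}"])
    using ht2(1)[OF n1(2) nt(1) o1] hyp1[OF n1(2)] S1 t nt(2) mperp2[of n1 nt]
      combine1[OF ns(1) nt(1) o n1(2) nt(1) o1 e1] kk by auto
  show "\<exists>k2. hplane k2 \<and> (\<exists>s t. hhyperplane s \<and> fixspace \<gamma> \<subseteq> s \<and>
          hhyperplane t \<and> hyp_orth t (fixspace \<gamma>) \<and> k2 = s \<inter> t) \<and> \<gamma> = halfturn k \<circ> halfturn k2"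
    apply (rule exI[of _ "mperp {n2, nt}"])
    using ht2(1)[OF n2(2) nt(1) o2] hyp1[OF n2(2)] S2 t nt(2) mperp2[of n2 nt]
      combine2[OF ns(1) nt(1) o n2(2) nt(1) o2 e2] kk by auto
qed



lemma caseII:
  assumes r1: "elliptic_I \<rho>1" and r2: "elliptic_I \<rho>2"
    and g1: "\<gamma> = \<rho>1 \<circ> \<rho>2" and g2: "\<gamma> = \<rho>2 \<circ> \<rho>1"
    and pp: "mperp (fixspace \<rho>1) \<subseteq> fixspace \<rho>2"
    and s: "hhyperplane s" "fixspace \<rho>1 \<subseteq> s"
    and t: "hhyperplane t" "fixspace \<rho>2 \<subseteq> t" and k: "k = s \<inter> t"
  shows "\<exists>k1. hplane k1 \<and> (\<exists>s t. hhyperplane s \<and> fixspace \<rho>1 \<subseteq> s \<and>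
          hhyperplane t \<and> fixspace \<rho>2 \<subseteq> t \<and> k1 = s \<inter> t) \<and> \<gamma> = halfturn k1 \<circ> halfturn k"
    "\<exists>k2. hplane k2 \<and> (\<exists>s t. hhyperplane s \<and> fixspace \<rho>1 \<subseteq> s \<and>
          hhyperplane t \<and> fixspace \<rho>2 \<subseteq> t \<and> k2 = s \<inter> t) \<and> \<gamma> = halfturn k \<circ> halfturn k2"
proof -
  let ?P1 = "fixspace \<rho>1" and ?P2 = "fixspace \<rho>2"
  have P1: "hplane ?P1" and iso1: "isom \<rho>1" using r1
    by (auto simp: elliptic_I_def elliptic_def orient_isom_isom)
  have P2: "hplane ?P2" and iso2: "isom \<rho>2" using r2
    by (auto simp: elliptic_I_def elliptic_def orient_isom_isom)
  have sP1: "subspace ?P1" using P1 by (simp add: hplane_def timelike_subspace_def)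
  have pp2: "mperp ?P2 \<subseteq> ?P1" using mperp_anti[OF pp] mperp_mperp[OF sP1] by simp
  obtain ns where ns: "mink ns ns > 0" "s = mperp {ns}" using hyp_normal[OF s(1)] by blast
  obtain nt where nt: "mink nt nt > 0" "t = mperp {nt}" using hyp_normal[OF t(1)] by blast
  have nsP: "ns \<in> mperp ?P1" using s(2) ns(2) by (auto simp: mperp_def mink_sym)
  have ntP: "nt \<in> mperp ?P2" using t(2) nt(2) by (auto simp: mperp_def mink_sym)
  have ns2: "ns \<in> ?P2" using nsP pp by auto
  have nt1: "nt \<in> ?P1" using ntP pp2 by auto
  have o: "mink ns nt = 0" using ntP ns2 by (auto simp: mperp_def mink_sym)
  have c1: "\<rho>1 \<circ> rf nt = rf nt \<circ> \<rho>1" by (rule rf_fix_commute[OF iso1]) (use nt1 in \<open>simp add: fixspace_def\<close>)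
  have c2: "\<rho>2 \<circ> rf ns = rf ns \<circ> \<rho>2" by (rule rf_fix_commute[OF iso2]) (use ns2 in \<open>simp add: fixspace_def\<close>)
  have c1': "\<And>v. \<rho>1 (rf nt v) = rf nt (\<rho>1 v)" using c1 by (metis comp_apply)
  have c2': "\<And>v. \<rho>2 (rf ns v) = rf ns (\<rho>2 v)" using c2 by (metis comp_apply)
  have kk: "k = mperp {ns, nt}" using k ns(2) nt(2) mperp2 by simp
  obtain a1 where a1: "a1 \<in> mperp ?P1" "mink a1 a1 > 0" "\<rho>1 \<circ> rf ns = rf a1"
    using core1[OF iso1 P1 refl nsP ns(1)] by blast
  obtain b1 where b1: "b1 \<in> mperp ?P2" "mink b1 b1 > 0" "\<rho>2 \<circ> rf nt = rf b1"
    using core1[OF iso2 P2 refl ntP nt(1)] by blast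
  obtain a2 where a2: "a2 \<in> mperp ?P1" "mink a2 a2 > 0" "rf ns \<circ> \<rho>1 = rf a2"
    using core1_sym[OF iso1 P1 refl nsP ns(1)] by blast
  obtain b2 where b2: "b2 \<in> mperp ?P2" "mink b2 b2 > 0" "rf nt \<circ> \<rho>2 = rf b2"
    using core1_sym[OF iso2 P2 refl ntP nt(1)] by blast
  have "a1 \<in> ?P2" "a2 \<in> ?P2" using a1(1) a2(1) pp by auto
  then have o1: "mink a1 b1 = 0" and o2: "mink a2 b2 = 0" using b1(1) b2(1) by (auto simp: mperp_def mink_sym)
  have e1: "\<gamma> \<circ> (rf ns \<circ> rf nt) = rf a1 \<circ> rf b1"
  proof -
    have "\<gamma> \<circ> (rf ns \<circ> rf nt) = \<rho>1 \<circ> (\<rho>2 \<circ> rf ns) \<circ> rf nt" by (simp add: g1 comp_assoc)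
    also have "\<dots> = (\<rho>1 \<circ> rf ns) \<circ> (\<rho>2 \<circ> rf nt)" by (simp add: fun_eq_iff c2')
    finally show ?thesis by (simp add: a1(3) b1(3))
  qed
  have e2: "(rf ns \<circ> rf nt) \<circ> \<gamma> = rf a2 \<circ> rf b2"
  proof -
    have "(rf ns \<circ> rf nt) \<circ> \<gamma> = rf ns \<circ> (rf nt \<circ> \<rho>1) \<circ> \<rho>2" by (simp add: g1 comp_assoc)
    also have "\<dots> = (rf ns \<circ> \<rho>1) \<circ> (rf nt \<circ> \<rho>2)" by (simp add: fun_eq_iff c1')
    finally show ?thesis by (simp add: a2(3) b2(3))
  qed
  have S1: "?P1 \<subseteq> mperp {a1}" "?P2 \<subseteq> mperp {b1}" "?P1 \<subseteq> mperp {a2}" "?P2 \<subseteq> mperp {b2}"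
    using a1(1) b1(1) a2(1) b2(1) by (auto simp: mperp_def mink_sym)
  show "\<exists>k1. hplane k1 \<and> (\<exists>s t. hhyperplane s \<and> fixspace \<rho>1 \<subseteq> s \<and>
          hhyperplane t \<and> fixspace \<rho>2 \<subseteq> t \<and> k1 = s \<inter> t) \<and> \<gamma> = halfturn k1 \<circ> halfturn k"
    apply (rule exI[of _ "mperp {a1, b1}"])
    using ht2(1)[OF a1(2) b1(2) o1] hyp1[OF a1(2)] hyp1[OF b1(2)] S1 mperp2[of a1 b1]
      combine1[OF ns(1) nt(1) o a1(2) b1(2) o1 e1] kk by blast
  show "\<exists>k2. hplane k2 \<and> (\<exists>s t. hhyperplane s \<and> fixspace \<rho>1 \<subseteq> s \<and>
          hhyperplane t \<and> fixspace \<rho>2 \<subseteq> t \<and> k2 = s \<inter> t) \<and> \<gamma> = halfturn k \<circ> halfturn k2"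
    apply (rule exI[of _ "mperp {a2, b2}"])
    using ht2(1)[OF a2(2) b2(2) o2] hyp1[OF a2(2)] hyp1[OF b2(2)] S1 mperp2[of a2 b2]
      combine2[OF ns(1) nt(1) o a2(2) b2(2) o2 e2] kk by blast
qed

lemma subspace_fix: "linear f \<Longrightarrow> subspace {v. f v = v}"
  by (auto simp: subspace_def linear_add linear_scale linear_0)

lemma caseInv:
  assumes g: "elliptic_II \<gamma>" "\<gamma> \<circ> \<gamma> = id" and k: "hplane k" "fixspace \<gamma> \<subseteq> k"
  shows "\<exists>k1. hplane k1 \<and> fixspace \<gamma> \<subseteq> k1 \<and> \<gamma> = halfturn k1 \<circ> halfturn k \<and> \<gamma> = halfturn k \<circ> halfturn k1"
proof -
  let ?X = "fixspace \<gamma>"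
  have iso: "isom \<gamma>" using g by (auto simp: elliptic_II_def elliptic_def orient_isom_isom)
  have lin: "linear \<gamma>" and mi: "\<And>x y. mink (\<gamma> x) (\<gamma> y) = mink x y" using iso by (auto simp: isom_def)
  have hp: "hpoint ?X" using g by (simp add: elliptic_II_def)
  then obtain x where x: "x \<in> ?X" "mink x x < 0" by (auto simp: hpoint_def timelike_subspace_def)
  have sX: "subspace ?X" and dX: "dim ?X = 1" using hp by (auto simp: hpoint_def timelike_subspace_def)
  have gx: "\<gamma> x = x" using x by (simp add: fixspace_def)
  have x0: "x \<noteq> 0" using x by auto
  have "span {x} \<subseteq> ?X" using x sX by (simp add: span_minimal)
  moreover have "dim (span {x}) \<ge> dim ?X" using x0 dX by simp
  ultimately have spX: "span {x} = ?X" using subspace_dim_equal[OF subspace_span sX] by blast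
  have gg: "\<And>v. \<gamma> (\<gamma> v) = v" using g(2) by (metis comp_apply id_apply)
  have neg: "\<And>v. mink v x = 0 \<Longrightarrow> \<gamma> v = - v"
  proof -
    fix v assume vx: "mink v x = 0"
    define w where "w = v + \<gamma> v"
    have "\<gamma> w = w" using lin gg by (simp add: w_def linear_add)
    then have "w \<in> ?X" by (simp add: fixspace_def)
    then obtain c where c: "w = c *\<^sub>R x" using spX span1 by blast
    have "mink (\<gamma> v) x = 0" using mi[of v x] gx vx by simp
    then have "mink w x = 0" using vx by (simp add: w_def mink_simps)
    then have "c * mink x x = 0" using c by (simp add: mink_simps)
    then have "c = 0" using x(2) by simp
    then have "w = 0" using c by simp
    then show "\<gamma> v = - v" by (simp add: w_def eq_neg_iff_add_eq_0 add.commute)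
  qed
  obtain n1 n2 where nn: "mink n1 n1 > 0" "mink n2 n2 > 0" "mink n1 n2 = 0" "k = mperp {n1, n2}"
    using hplane_normals[OF k(1)] by blast
  have xk: "x \<in> k" using x k(2) by auto
  have xn1: "mink x n1 = 0" and xn2: "mink x n2 = 0" using xk nn(4) by (auto simp: mperp_def)
  have g1: "\<gamma> n1 = - n1" using neg xn1 mink_sym by metis
  have g2: "\<gamma> n2 = - n2" using neg xn2 mink_sym by metis
  have hk: "halfturn k = rf n1 \<circ> rf n2" using ht2(2)[OF nn(1-3)] nn(4) by simp
  have lk: "linear (halfturn k)" unfolding hk by (rule linear_compose[OF linear_rf linear_rf])
  have lf1: "linear (\<gamma> \<circ> halfturn k)" by (rule linear_compose[OF lk lin])
  have lf2: "linear (halfturn k \<circ> \<gamma>)" by (rule linear_compose[OF lin lk])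
  let ?W = "span {x, n1, n2}"
  have ind: "independent {x, n1, n2}"
  proof -
    have "x \<notin> span {n1, n2}"
    proof
      assume "x \<in> span {n1, n2}"
      then obtain a b where "x = a *\<^sub>R n1 + b *\<^sub>R n2" by (auto simp: span2)
      then have "mink x x = mink x (a *\<^sub>R n1 + b *\<^sub>R n2)" by simp
      also have "\<dots> = 0" by (simp add: mink_simps xn1 xn2)
      finally show False using x(2) by simp
    qed
    moreover have "x \<noteq> n1" "x \<noteq> n2" using x(2) nn by auto
    ultimately show ?thesis using indep2(1)[OF nn(1-3)] by (simp add: independent_insert)
  qed
  have "x \<noteq> n1" "x \<noteq> n2" using x(2) nn by auto
  then have card3: "card {x, n1, n2} = 3" using indep2(2)[OF nn(1-3)] by simp
  have tlW: "timelike_subspace ?W" using x by (auto simp: timelike_subspace_def span_base)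
  have hW: "hplane ?W" using tlW ind card3 by (simp add: hplane_def dim_eq_card_independent)
  have pW: "mperp ?W = mperp {x, n1, n2}" by (rule mperp_span)
  have XW: "?X \<subseteq> ?W" using spX span_mono[of "{x}" "{x,n1,n2}"] by auto
  have rfx1: "rf n1 x = x" "rf n2 x = x" using xn1 xn2 by (simp_all add: rf_orth)
  have on21: "mink n2 n1 = 0" using nn(3) mink_sym by metis
  have r12: "rf n1 n2 = n2" "rf n2 n1 = n1" using nn(3) on21 by (simp_all add: rf_orth)
  have r11: "rf n1 n1 = - n1" "rf n2 n2 = - n2" using nn(1,2) by (simp_all add: rf_self)
  have ln: "\<And>v. \<gamma> (- v) = - \<gamma> v" "\<And>v. rf n1 (- v) = - rf n1 v" "\<And>v. rf n2 (- v) = - rf n2 v"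
    using lin by (simp_all add: linear_neg linear_rf)
  have F1: "halfturn ?W = \<gamma> \<circ> halfturn k"
  proof (rule halfturn_char[OF hW])
    show "linear (\<gamma> \<circ> halfturn k)" by (rule lf1)
    have "{x, n1, n2} \<subseteq> {v. (\<gamma> \<circ> halfturn k) v = v}"
      using rfx1 gx g1 g2 r12 r11 ln by (auto simp: hk)
    moreover have "subspace {v. (\<gamma> \<circ> halfturn k) v = v}"
      by (rule subspace_fix) (rule lf1)
    ultimately have "?W \<subseteq> {v. (\<gamma> \<circ> halfturn k) v = v}"
      by (rule span_minimal)
    then show "\<forall>v\<in>?W. (\<gamma> \<circ> halfturn k) v = v" by blast
    show "\<forall>v\<in>mperp ?W. (\<gamma> \<circ> halfturn k) v = - v"
    proof
      fix v assume "v \<in> mperp ?W"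
      then have "mink v x = 0" "mink v n1 = 0" "mink v n2 = 0" using pW by (auto simp: mperp_def)
      then show "(\<gamma> \<circ> halfturn k) v = - v" by (simp add: hk rf_orth neg)
    qed
  qed
  have F2: "halfturn ?W = halfturn k \<circ> \<gamma>"
  proof (rule halfturn_char[OF hW])
    show "linear (halfturn k \<circ> \<gamma>)" by (rule lf2)
    have "{x, n1, n2} \<subseteq> {v. (halfturn k \<circ> \<gamma>) v = v}"
      using rfx1 gx g1 g2 r12 r11 ln by (auto simp: hk)
    moreover have "subspace {v. (halfturn k \<circ> \<gamma>) v = v}"
      by (rule subspace_fix) (rule lf2)
    ultimately have "?W \<subseteq> {v. (halfturn k \<circ> \<gamma>) v = v}"
      by (rule span_minimal)
    then show "\<forall>v\<in>?W. (halfturn k \<circ> \<gamma>) v = v" by blast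
    show "\<forall>v\<in>mperp ?W. (halfturn k \<circ> \<gamma>) v = - v"
    proof
      fix v assume "v \<in> mperp ?W"
      then have v: "mink v x = 0" "mink v n1 = 0" "mink v n2 = 0" using pW by (auto simp: mperp_def)
      then have "\<gamma> v = - v" by (simp add: neg)
      then show "(halfturn k \<circ> \<gamma>) v = - v"
        using v by (simp add: hk rf_orth linear_neg[OF linear_rf] mink_simps)
    qed
  qed
  have inv: "halfturn k \<circ> halfturn k = id" using halfturn_props(2)[OF k(1)] .
  have "\<gamma> = halfturn ?W \<circ> halfturn k" using F1 inv by (metis comp_assoc comp_id)
  moreover have "\<gamma> = halfturn k \<circ> halfturn ?W" using F2 inv by (metis comp_assoc id_comp)
  ultimately show ?thesis using hW XW by blast
qed



lemma cs4:
  fixes a1 a2 a3 a4 b1 b2 b3 b4 :: real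
  shows "(a1*b1+a2*b2+a3*b3+a4*b4)^2 \<le> (a1^2+a2^2+a3^2+a4^2)*(b1^2+b2^2+b3^2+b4^2)"
proof -
  have "(a1^2+a2^2+a3^2+a4^2)*(b1^2+b2^2+b3^2+b4^2) - (a1*b1+a2*b2+a3*b3+a4*b4)^2
     = (a1*b2-a2*b1)^2 + (a1*b3-a3*b1)^2 + (a1*b4-a4*b1)^2 + (a2*b3-a3*b2)^2
       + (a2*b4-a4*b2)^2 + (a3*b4-a4*b3)^2"
    by (simp add: power2_eq_square algebra_simps)
  moreover have "(a1*b2-a2*b1)^2 + (a1*b3-a3*b1)^2 + (a1*b4-a4*b1)^2 + (a2*b3-a3*b2)^2
       + (a2*b4-a4*b2)^2 + (a3*b4-a4*b3)^2 \<ge> 0" by simp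
  ultimately show ?thesis by linarith
qed

lemma null_same_cone:
  assumes u: "mink u u = 0" and w: "mink w w = 0" and uw: "mink u w < 0"
  shows "u$0 * w$0 > 0"
proof (rule ccontr)
  assume ng: "\<not> u$0 * w$0 > 0"
  define s where "s = u$1*w$1 + u$2*w$2 + u$3*w$3 + u$4*w$4"
  have su: "(u$1)^2 + (u$2)^2 + (u$3)^2 + (u$4)^2 = (u$0)^2" using u by (simp add: mink_def power2_eq_square)
  have sw: "(w$1)^2 + (w$2)^2 + (w$3)^2 + (w$4)^2 = (w$0)^2" using w by (simp add: mink_def power2_eq_square)
  have lt: "s < u$0 * w$0" using uw by (simp add: mink_def s_def)
  have "s^2 \<le> ((u$1)^2 + (u$2)^2 + (u$3)^2 + (u$4)^2) * ((w$1)^2 + (w$2)^2 + (w$3)^2 + (w$4)^2)"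
    unfolding s_def by (rule cs4)
  also have "\<dots> = (u$0)^2 * (w$0)^2" by (simp only: su sw)
  finally have "s^2 \<le> (u$0)^2 * (w$0)^2" .
  then have "s^2 \<le> (u$0 * w$0)^2" by (simp add: power_mult_distrib)
  moreover have "(u$0 * w$0)^2 < s^2"
  proof -
    have h1: "0 \<le> - (u$0 * w$0)" using ng by simp
    have h2: "- (u$0 * w$0) < - s" using lt by simp
    have "(- (u$0 * w$0))^2 < (- s)^2" using power_strict_mono[OF h2 h1, of 2] by simp
    then show ?thesis by simp
  qed
  ultimately show False by linarith
qed

lemma timelike_0: "mink y y < 0 \<Longrightarrow> y$0 \<noteq> 0"
  using mink_zero0_nonneg[of y] by auto

lemma time_sign:
  assumes g: "orient_isom g" and y: "mink y y < 0"
  shows "(g y)$0 * y$0 > 0"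
proof -
  have tp: "\<And>v. mink v v < 0 \<Longrightarrow> v$0 > 0 \<Longrightarrow> (g v)$0 > 0" using g by (auto simp: orient_isom_def)
  have lin: "linear g" using g by (simp add: orient_isom_def)
  have "y$0 \<noteq> 0" using timelike_0[OF y] .
  then show ?thesis
  proof (cases "y$0 > 0")
    case True then show ?thesis using tp[OF y] by simp
  next
    case False
    then have "(- y)$0 > 0" using \<open>y$0 \<noteq> 0\<close> by simp
    moreover have "mink (-y) (-y) < 0" using y by (simp add: mink_simps)
    ultimately have "(g (-y))$0 > 0" using tp by blast
    then have "(g y)$0 < 0" using linear_neg[OF lin] by simp
    then show ?thesis using False \<open>y$0 \<noteq> 0\<close> by (simp add: mult_neg_neg)
  qed
qed



lemma eig_decomp:
  assumes iso: "isom \<tau>" and u: "mink u u = 0" and w: "mink w w = 0" and K: "mink u w \<noteq> 0"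
    and tu: "\<tau> u = c *\<^sub>R u" and tw: "\<tau> w = d *\<^sub>R w"
    and v: "mink v v = 0" and tv: "\<tau> v = e *\<^sub>R v"
  shows "\<exists>\<alpha> \<beta>. \<beta> * (e*c - 1) = 0 \<and> \<alpha> * (e*d - 1) = 0 \<and>
           ((\<alpha> = 0 \<or> \<beta> = 0) \<longrightarrow> v = \<alpha> *\<^sub>R u + \<beta> *\<^sub>R w)"
proof -
  have mi: "\<And>x y. mink (\<tau> x) (\<tau> y) = mink x y" using iso by (auto simp: isom_def)
  define k where "k = mink u w"
  have wu: "mink w u = k" by (simp add: k_def mink_sym)
  define \<alpha> where "\<alpha> = mink v w / k"
  define \<beta> where "\<beta> = mink v u / k"
  define z where "z = v - \<alpha> *\<^sub>R u - \<beta> *\<^sub>R w"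
  have k0: "k \<noteq> 0" using K by (simp add: k_def)
  have zu: "mink z u = 0" using k0 by (simp add: z_def \<alpha>_def \<beta>_def mink_simps u wu)
  have zw: "mink z w = 0" using k0 by (simp add: z_def \<alpha>_def \<beta>_def mink_simps w k_def[symmetric])
  have e1: "\<beta> * (e*c - 1) = 0"
  proof -
    have "mink v u = mink (\<tau> v) (\<tau> u)" by (simp add: mi)
    also have "\<dots> = e * c * mink v u" by (simp add: tv tu mink_simps)
    finally have "mink v u * (e*c - 1) = 0" by (simp add: algebra_simps)
    then show ?thesis by (simp add: \<beta>_def)
  qed
  have e2: "\<alpha> * (e*d - 1) = 0"
  proof -
    have "mink v w = mink (\<tau> v) (\<tau> w)" by (simp add: mi)
    also have "\<dots> = e * d * mink v w" by (simp add: tv tw mink_simps)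
    finally have "mink v w * (e*d - 1) = 0" by (simp add: algebra_simps)
    then show ?thesis by (simp add: \<alpha>_def)
  qed
  have vdec: "v = \<alpha> *\<^sub>R u + \<beta> *\<^sub>R w + z" by (simp add: z_def)
  have vv: "mink v v = 2 * \<alpha> * \<beta> * k + mink z z"
  proof -
    have uz: "mink u z = 0" "mink w z = 0" using zu zw by (simp_all add: mink_sym)
    show ?thesis
      by (subst (1 2) vdec) (simp add: mink_simps u w wu uz zu zw k_def[symmetric] algebra_simps)
  qed
  have "(\<alpha> = 0 \<or> \<beta> = 0) \<longrightarrow> v = \<alpha> *\<^sub>R u + \<beta> *\<^sub>R w"
  proof
    assume "\<alpha> = 0 \<or> \<beta> = 0"
    then have zz: "mink z z = 0" using vv v by auto
    define y where "y = u - k *\<^sub>R w"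
    have yy: "mink y y < 0"
    proof -
      have "mink y y = - 2 * k * k" by (simp add: y_def mink_simps u w wu k_def[symmetric])
      moreover have "k * k > 0" using k0 by (cases "k > 0") (auto simp: mult_neg_neg)
      ultimately show ?thesis by simp
    qed
    have "mink y z = 0" using zu zw by (simp add: y_def mink_simps mink_sym[of _ z])
    then have "z = 0" using timelike_orth[OF yy] zz by fastforce
    then show "v = \<alpha> *\<^sub>R u + \<beta> *\<^sub>R w" using vdec by simp
  qed
  then show ?thesis using e1 e2 by blast
qed

lemma hyp_struct:
  assumes ph: "pure_hyperbolic \<tau>"
  shows "\<exists>u w c. mink u u = 0 \<and> mink w w = 0 \<and> u \<noteq> 0 \<and> w \<noteq> 0 \<and> mink u w \<noteq> 0 \<and>
    \<tau> u = c *\<^sub>R u \<and> \<tau> w = (1/c) *\<^sub>R w \<and> c > 0 \<and> c \<noteq> 1 \<and> axis \<tau> = span {u, w} \<and>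
    (\<forall>v. mink v u = 0 \<and> mink v w = 0 \<longrightarrow> \<tau> v = v) \<and>
    (\<forall>v. v \<noteq> 0 \<and> mink v v = 0 \<and> \<tau> v = c *\<^sub>R v \<longrightarrow> (\<exists>a. v = a *\<^sub>R u)) \<and>
    (\<forall>v. v \<noteq> 0 \<and> mink v v = 0 \<and> \<tau> v = (1/c) *\<^sub>R v \<longrightarrow> (\<exists>a. v = a *\<^sub>R w))"
proof -
  have lox: "loxodromic \<tau>" using ph by (simp add: pure_hyperbolic_def)
  have oi: "orient_isom \<tau>" and ne: "\<not> elliptic \<tau>" using lox by (auto simp: loxodromic_def)
  have iso: "isom \<tau>" using oi by (rule orient_isom_isom)
  have lin: "linear \<tau>" and mi: "\<And>x y. mink (\<tau> x) (\<tau> y) = mink x y" using iso by (auto simp: isom_def)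
  obtain u w where uf: "u \<in> fixed_bdry \<tau>" and wf: "w \<in> fixed_bdry \<tau>" and np: "\<not> (\<exists>c. w = c *\<^sub>R u)"
    using lox by (auto simp: loxodromic_def)
  obtain c0 where u: "u \<noteq> 0" "mink u u = 0" "\<tau> u = c0 *\<^sub>R u" using uf by (auto simp: fixed_bdry_def)
  obtain d0 where w: "w \<noteq> 0" "mink w w = 0" "\<tau> w = d0 *\<^sub>R w" using wf by (auto simp: fixed_bdry_def)
  have K: "mink u w \<noteq> 0" using null_orth[OF u(2,1) w(2)] np by blast
  have cd: "c0 * d0 = 1"
  proof -
    have "mink u w = mink (\<tau> u) (\<tau> w)" by (simp add: mi)
    also have "\<dots> = c0 * d0 * mink u w" by (simp add: u(3) w(3) mink_simps)
    finally show ?thesis using K by simp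
  qed
  define k where "k = mink u w"
  have wu: "mink w u = k" by (simp add: k_def mink_sym)
  define w' where "w' = (- k) *\<^sub>R w"
  define y where "y = u + w'"
  have yy: "mink y y < 0"
  proof -
    have "mink y y = - 2 * k * k" by (simp add: y_def w'_def mink_simps u w wu k_def[symmetric])
    moreover have "k * k > 0" using K by (cases "k > 0") (auto simp: mult_neg_neg simp: k_def)
    ultimately show ?thesis by simp
  qed
  have w'n: "mink w' w' = 0" by (simp add: w'_def mink_simps w)
  have uw': "mink u w' < 0"
  proof -
    have "mink u w' = - (k * k)" by (simp add: w'_def mink_simps k_def)
    moreover have "k * k > 0" using K by (cases "k > 0") (auto simp: mult_neg_neg simp: k_def)
    ultimately show ?thesis by simp
  qed
  have sc: "u$0 * w'$0 > 0" by (rule null_same_cone[OF u(2) w'n uw'])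
  have tw': "\<tau> w' = d0 *\<^sub>R w'" unfolding w'_def linear_scale[OF lin] w(3) by simp
  have ty: "\<tau> y = c0 *\<^sub>R u + d0 *\<^sub>R w'" using lin u(3) tw' by (simp add: y_def linear_add)
  have ts: "(\<tau> y)$0 * y$0 > 0" by (rule time_sign[OF oi yy])
  have c0p: "c0 > 0"
  proof (rule ccontr)
    assume "\<not> c0 > 0"
    then have c0n: "c0 < 0" using cd by (cases "c0 = 0") auto
    have d0n: "d0 < 0"
    proof (rule ccontr)
      assume "\<not> d0 < 0"
      then have "c0 * d0 \<le> 0" using c0n by (simp add: mult_nonpos_nonneg)
      then show False using cd by simp
    qed
    have u0: "u$0 \<noteq> 0" using sc by auto
    have "u$0 * u$0 > 0" using u0 by (cases "u$0 > 0") (auto simp: mult_neg_neg)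
    then have t1: "c0 * (u$0 * u$0) < 0" using c0n by (simp add: mult_neg_pos)
    have t2: "(c0 + d0) * (u$0 * w'$0) < 0" using c0n d0n sc by (simp add: mult_neg_pos)
    have t3: "d0 * (w'$0 * w'$0) \<le> 0" using d0n by (simp add: mult_nonpos_nonneg)
    have "(\<tau> y)$0 * y$0 = c0 * (u$0 * u$0) + (c0 + d0) * (u$0 * w'$0) + d0 * (w'$0 * w'$0)"
      unfolding ty by (simp add: y_def algebra_simps)
    then show False using t1 t2 t3 ts by linarith
  qed
  have d0c: "d0 = 1 / c0" using cd c0p by (simp add: field_simps)
  have c1: "c0 \<noteq> 1"
  proof
    assume "c0 = 1"
    then have "d0 = 1" using d0c by simp
    then have "\<tau> y = y" using ty \<open>c0 = 1\<close> by (simp add: y_def)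
    then show False using ne oi yy by (auto simp: elliptic_def)
  qed
  have csq: "c0 * c0 \<noteq> 1"
  proof
    assume "c0 * c0 = 1"
    then have "(c0 - 1) * (c0 + 1) = 0" by (simp add: algebra_simps)
    then show False using c1 c0p by simp
  qed
  have fb: "fixed_bdry \<tau> \<subseteq> span {u, w}"
  proof
    fix v assume "v \<in> fixed_bdry \<tau>"
    then obtain e where v: "v \<noteq> 0" "mink v v = 0" "\<tau> v = e *\<^sub>R v" by (auto simp: fixed_bdry_def)
    obtain \<alpha> \<beta> where ab: "\<beta> * (e*c0 - 1) = 0" "\<alpha> * (e*d0 - 1) = 0"
        "(\<alpha> = 0 \<or> \<beta> = 0) \<longrightarrow> v = \<alpha> *\<^sub>R u + \<beta> *\<^sub>R w"
      using eig_decomp[OF iso u(2) w(2) K u(3) w(3) v(2,3)] by blast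
    have "\<alpha> = 0 \<or> \<beta> = 0"
    proof (rule ccontr)
      assume "\<not> (\<alpha> = 0 \<or> \<beta> = 0)"
      then have "e*c0 = 1" "e*d0 = 1" using ab by auto
      then have "e * (c0 - d0) = 0" by (simp add: algebra_simps)
      moreover have "e \<noteq> 0" using \<open>e*c0 = 1\<close> by auto
      ultimately have "c0 = d0" by simp
      then show False using cd csq by simp
    qed
    then have "v = \<alpha> *\<^sub>R u + \<beta> *\<^sub>R w" using ab by blast
    then show "v \<in> span {u, w}" by (auto simp: span2)
  qed
  have "{u, w} \<subseteq> fixed_bdry \<tau>" using uf wf by simp
  then have "span {u, w} \<subseteq> span (fixed_bdry \<tau>)" by (rule span_mono)
  moreover have "span (fixed_bdry \<tau>) \<subseteq> span {u, w}" using fb by (simp add: span_minimal)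
  ultimately have ax: "axis \<tau> = span {u, w}" by (simp add: axis_def)
  have fixp: "\<forall>v. mink v u = 0 \<and> mink v w = 0 \<longrightarrow> \<tau> v = v"
  proof (intro allI impI)
    fix v assume "mink v u = 0 \<and> mink v w = 0"
    then have "v \<in> mperp {u, w}" by (simp add: mperp_def mink_sym)
    then have "v \<in> mperp (axis \<tau>)" by (simp add: ax mperp_span)
    then show "\<tau> v = v" using ph by (simp add: pure_hyperbolic_def)
  qed
  have eu: "\<forall>v. v \<noteq> 0 \<and> mink v v = 0 \<and> \<tau> v = c0 *\<^sub>R v \<longrightarrow> (\<exists>a. v = a *\<^sub>R u)"
  proof (intro allI impI)
    fix v assume v: "v \<noteq> 0 \<and> mink v v = 0 \<and> \<tau> v = c0 *\<^sub>R v"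
    obtain \<alpha> \<beta> where ab: "\<beta> * (c0*c0 - 1) = 0" "\<alpha> * (c0*d0 - 1) = 0"
        "(\<alpha> = 0 \<or> \<beta> = 0) \<longrightarrow> v = \<alpha> *\<^sub>R u + \<beta> *\<^sub>R w"
      using eig_decomp[OF iso u(2) w(2) K u(3) w(3)] v by blast
    have "\<beta> = 0" using ab(1) csq by simp
    then show "\<exists>a. v = a *\<^sub>R u" using ab(3) by auto
  qed
  have ew: "\<forall>v. v \<noteq> 0 \<and> mink v v = 0 \<and> \<tau> v = (1/c0) *\<^sub>R v \<longrightarrow> (\<exists>a. v = a *\<^sub>R w)"
  proof (intro allI impI)
    fix v assume v: "v \<noteq> 0 \<and> mink v v = 0 \<and> \<tau> v = (1/c0) *\<^sub>R v"
    obtain \<alpha> \<beta> where ab: "\<beta> * ((1/c0)*c0 - 1) = 0" "\<alpha> * ((1/c0)*d0 - 1) = 0"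
        "(\<alpha> = 0 \<or> \<beta> = 0) \<longrightarrow> v = \<alpha> *\<^sub>R u + \<beta> *\<^sub>R w"
      using eig_decomp[OF iso u(2) w(2) K u(3) w(3)] v by blast
    have "(1/c0)*d0 - 1 \<noteq> 0"
    proof
      assume "(1/c0)*d0 - 1 = 0"
      then have "d0 = c0" using c0p by (simp add: field_simps)
      then show False using cd csq by simp
    qed
    then have "\<alpha> = 0" using ab(2) mult_eq_0_iff by metis
    then show "\<exists>a. v = a *\<^sub>R w" using ab(3) by auto
  qed
  show ?thesis
    apply (rule exI[of _ u], rule exI[of _ w], rule exI[of _ c0])
    using u w K c0p c1 d0c ax fixp eu ew by simp
qed



lemma rf_null2:
  assumes u: "mink u u = 0" and w: "mink w w = 0" and K: "mink u w \<noteq> 0"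
    and a: "\<alpha> \<noteq> 0" and b: "\<beta> \<noteq> 0"
  shows "rf (\<alpha> *\<^sub>R u + \<beta> *\<^sub>R w) u = (- (\<beta>/\<alpha>)) *\<^sub>R w"
    "rf (\<alpha> *\<^sub>R u + \<beta> *\<^sub>R w) w = (- (\<alpha>/\<beta>)) *\<^sub>R u"
proof -
  have wu: "mink w u = mink u w" by (rule mink_sym)
  have nn: "mink (\<alpha> *\<^sub>R u + \<beta> *\<^sub>R w) (\<alpha> *\<^sub>R u + \<beta> *\<^sub>R w) = 2 * \<alpha> * \<beta> * mink u w"
    by (simp add: mink_simps u w wu algebra_simps)
  have c1: "2 * mink u (\<alpha> *\<^sub>R u + \<beta> *\<^sub>R w) / mink (\<alpha> *\<^sub>R u + \<beta> *\<^sub>R w) (\<alpha> *\<^sub>R u + \<beta> *\<^sub>R w) = 1/\<alpha>"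
    unfolding nn using K a b by (simp add: mink_simps u)
  have c2: "2 * mink w (\<alpha> *\<^sub>R u + \<beta> *\<^sub>R w) / mink (\<alpha> *\<^sub>R u + \<beta> *\<^sub>R w) (\<alpha> *\<^sub>R u + \<beta> *\<^sub>R w) = 1/\<beta>"
    unfolding nn using K a b by (simp add: mink_simps w wu)
  show "rf (\<alpha> *\<^sub>R u + \<beta> *\<^sub>R w) u = (- (\<beta>/\<alpha>)) *\<^sub>R w"
    unfolding rf_def c1 using a by (simp add: vec_eq_iff field_simps)
  show "rf (\<alpha> *\<^sub>R u + \<beta> *\<^sub>R w) w = (- (\<alpha>/\<beta>)) *\<^sub>R u"
    unfolding rf_def c2 using b by (simp add: vec_eq_iff field_simps)
qed

lemma coreH:
  assumes lin: "linear \<tau>" and u: "mink u u = 0" and w: "mink w w = 0" and K: "mink u w \<noteq> 0"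
    and tu: "\<tau> u = c *\<^sub>R u" and tw: "\<tau> w = (1/c) *\<^sub>R w" and c: "c > 0"
    and fixp: "\<forall>v. mink v u = 0 \<and> mink v w = 0 \<longrightarrow> \<tau> v = v"
    and nS: "n \<in> span {u, w}" and N: "mink n n > 0"
  shows "\<exists>n'. n' \<in> span {u, w} \<and> mink n' n' > 0 \<and> \<tau> \<circ> rf n = rf n'"
proof -
  have wu: "mink w u = mink u w" by (rule mink_sym)
  obtain \<alpha> \<beta> where n: "n = \<alpha> *\<^sub>R u + \<beta> *\<^sub>R w" using nS by (auto simp: span2)
  have nn: "mink n n = 2 * \<alpha> * \<beta> * mink u w" by (simp add: n mink_simps u w wu algebra_simps)
  have a0: "\<alpha> \<noteq> 0" and b0: "\<beta> \<noteq> 0" using N nn by auto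
  define n' where "n' = (\<alpha> * c) *\<^sub>R u + \<beta> *\<^sub>R w"
  have n'S: "n' \<in> span {u, w}" by (auto simp: n'_def span2)
  have nn': "mink n' n' = c * (2 * \<alpha> * \<beta> * mink u w)"
    by (simp add: n'_def mink_simps u w wu algebra_simps)
  have N': "mink n' n' > 0" using nn' nn N c by simp
  have ac0: "\<alpha> * c \<noteq> 0" using a0 c by simp
  define y where "y = u - mink u w *\<^sub>R w"
  have yy: "mink y y < 0"
  proof -
    have "mink y y = - 2 * mink u w * mink u w" by (simp add: y_def mink_simps u w wu)
    moreover have "mink u w * mink u w > 0" using K by (cases "mink u w > 0") (auto simp: mult_neg_neg)
    ultimately show ?thesis by simp
  qed
  have "y = 1 *\<^sub>R u + (- mink u w) *\<^sub>R w" by (simp add: y_def)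
  then have yS: "y \<in> span {u, w}" unfolding span2 by blast
  have tlS: "timelike_subspace (span {u, w})"
    using yy yS by (auto simp: timelike_subspace_def)
  have D: "\<And>v. \<exists>p\<in>mperp {u, w}. \<exists>x y. v = p + x *\<^sub>R u + y *\<^sub>R w"
  proof -
    fix v
    obtain a b where ab: "a \<in> span {u, w}" "b \<in> mperp (span {u, w})" "v = a + b"
      using nondeg_decomp[OF subspace_span timelike_nondeg[OF tlS]] by blast
    obtain x y where "a = x *\<^sub>R u + y *\<^sub>R w" using ab(1) by (auto simp: span2)
    then show "\<exists>p\<in>mperp {u, w}. \<exists>x y. v = p + x *\<^sub>R u + y *\<^sub>R w"
      using ab by (metis add.commute add.assoc mperp_span)
  qed
  have "\<tau> \<circ> rf n = rf n'"
  proof (rule lin_eq_decomp[OF linear_compose[OF linear_rf lin] linear_rf D])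
    show "\<forall>v\<in>mperp {u, w}. (\<tau> \<circ> rf n) v = rf n' v"
    proof
      fix v assume "v \<in> mperp {u, w}"
      then have vu: "mink v u = 0" and vw: "mink v w = 0" by (auto simp: mperp_def)
      have "mink v n = 0" "mink v n' = 0" by (simp_all add: n n'_def mink_simps vu vw)
      then show "(\<tau> \<circ> rf n) v = rf n' v" using fixp vu vw by (simp add: rf_orth)
    qed
    have ls: "\<And>x v. \<tau> (x *\<^sub>R v) = x *\<^sub>R \<tau> v" using lin by (simp add: linear_scale)
    have "(\<tau> \<circ> rf n) u = \<tau> ((- (\<beta>/\<alpha>)) *\<^sub>R w)" unfolding n using rf_null2(1)[OF u w K a0 b0] by simp
    also have "\<dots> = (- (\<beta>/\<alpha>) * (1/c)) *\<^sub>R w" by (simp only: ls tw scaleR_scaleR)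
    also have "\<dots> = (- (\<beta>/(\<alpha>*c))) *\<^sub>R w" by simp
    also have "\<dots> = rf n' u" unfolding n'_def using rf_null2(1)[OF u w K ac0 b0] by simp
    finally show "(\<tau> \<circ> rf n) u = rf n' u" .
    have "(\<tau> \<circ> rf n) w = \<tau> ((- (\<alpha>/\<beta>)) *\<^sub>R u)" unfolding n using rf_null2(2)[OF u w K a0 b0] by simp
    also have "\<dots> = (- (\<alpha>/\<beta>) * c) *\<^sub>R u" by (simp only: ls tu scaleR_scaleR)
    also have "\<dots> = (- ((\<alpha>*c)/\<beta>)) *\<^sub>R u" by simp
    also have "\<dots> = rf n' w" unfolding n'_def using rf_null2(2)[OF u w K ac0 b0] by simp
    finally show "(\<tau> \<circ> rf n) w = rf n' w" .
  qed
  then show ?thesis using n'S N' by blast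
qed

lemma coreH_sym:
  assumes iso: "isom \<tau>" and u: "mink u u = 0" and w: "mink w w = 0" and K: "mink u w \<noteq> 0"
    and tu: "\<tau> u = c *\<^sub>R u" and tw: "\<tau> w = (1/c) *\<^sub>R w" and c: "c > 0"
    and fixp: "\<forall>v. mink v u = 0 \<and> mink v w = 0 \<longrightarrow> \<tau> v = v"
    and nS: "n \<in> span {u, w}" and N: "mink n n > 0"
  shows "\<exists>n'. n' \<in> span {u, w} \<and> mink n' n' > 0 \<and> rf n \<circ> \<tau> = rf n'"
proof -
  have lin: "linear \<tau>" using iso by (simp add: isom_def)
  have wu: "mink w u = mink u w" by (rule mink_sym)
  obtain \<alpha> \<beta> where n: "n = \<alpha> *\<^sub>R u + \<beta> *\<^sub>R w" using nS by (auto simp: span2)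
  define m0 where "m0 = (\<alpha> / c) *\<^sub>R u + (\<beta> * c) *\<^sub>R w"
  have tm: "\<tau> m0 = n" using lin tu tw c by (simp add: m0_def n linear_add linear_scale)
  have mS: "m0 \<in> span {u, w}" by (auto simp: m0_def span2)
  have "mink m0 m0 = mink n n" using c by (simp add: m0_def n mink_simps u w wu algebra_simps)
  then have M: "mink m0 m0 > 0" using N by simp
  obtain n' where "n' \<in> span {u, w}" "mink n' n' > 0" "\<tau> \<circ> rf m0 = rf n'"
    using coreH[OF lin u w K tu tw c fixp mS M] by blast
  then show ?thesis using sym_from[OF iso tm] by metis
qed



lemma mperp_mperp_single: "mperp (mperp {a}) = span {a}"
  by (metis mperp_mperp mperp_span subspace_span)

lemma caseH:
  assumes ph: "pure_hyperbolic \<gamma>" and s: "hhyperplane s" "hyp_orth s (axis \<gamma>)"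
    and t: "hhyperplane t" "axis \<gamma> \<subseteq> t" and k: "k = s \<inter> t"
  shows "\<exists>k1. hplane k1 \<and> (\<exists>s t. hhyperplane s \<and> hyp_orth s (axis \<gamma>) \<and>
          hhyperplane t \<and> axis \<gamma> \<subseteq> t \<and> k1 = s \<inter> t) \<and> \<gamma> = halfturn k1 \<circ> halfturn k"
    "\<exists>k2. hplane k2 \<and> (\<exists>s t. hhyperplane s \<and> hyp_orth s (axis \<gamma>) \<and>
          hhyperplane t \<and> axis \<gamma> \<subseteq> t \<and> k2 = s \<inter> t) \<and> \<gamma> = halfturn k \<circ> halfturn k2"
proof -
  obtain u w c where H: "mink u u = 0" "mink w w = 0" "u \<noteq> 0" "w \<noteq> 0" "mink u w \<noteq> 0"
    "\<gamma> u = c *\<^sub>R u" "\<gamma> w = (1/c) *\<^sub>R w" "c > 0" "c \<noteq> 1" "axis \<gamma> = span {u, w}"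
    "\<forall>v. mink v u = 0 \<and> mink v w = 0 \<longrightarrow> \<gamma> v = v"
    using hyp_struct[OF ph] by blast
  have iso: "isom \<gamma>" using ph by (simp add: pure_hyperbolic_def loxodromic_def orient_isom_isom)
  have lin: "linear \<gamma>" using iso by (simp add: isom_def)
  obtain ns where ns: "mink ns ns > 0" "s = mperp {ns}" using hyp_normal[OF s(1)] by blast
  obtain nt where nt: "mink nt nt > 0" "t = mperp {nt}" using hyp_normal[OF t(1)] by blast
  have nsS: "ns \<in> span {u, w}" using s(2) ns(2) in_own_perp[of ns] H(10) by (auto simp: hyp_orth_def)
  have uwt: "u \<in> mperp {nt}" "w \<in> mperp {nt}" using t(2) nt(2) H(10) span_base[of u "{u,w}"] span_base[of w "{u,w}"] by auto
  have ntu: "mink nt u = 0" "mink nt w = 0" using uwt by (auto simp: mperp_def mink_sym)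
  have gnt: "\<gamma> nt = nt" using H(11) ntu by blast
  have Sperp: "span {u, w} \<subseteq> mperp {nt}" using uwt subspace_mperp by (simp add: span_minimal)
  have o: "mink ns nt = 0" using nsS Sperp by (auto simp: mperp_def)
  have comm: "\<gamma> \<circ> rf nt = rf nt \<circ> \<gamma>" by (rule rf_fix_commute[OF iso gnt])
  have kk: "k = mperp {ns, nt}" using k ns(2) nt(2) mperp2 by simp
  obtain n1 where n1: "n1 \<in> span {u, w}" "mink n1 n1 > 0" "\<gamma> \<circ> rf ns = rf n1"
    using coreH[OF lin H(1,2,5,6,7,8,11) nsS ns(1)] by blast
  obtain n2 where n2: "n2 \<in> span {u, w}" "mink n2 n2 > 0" "rf ns \<circ> \<gamma> = rf n2"
    using coreH_sym[OF iso H(1,2,5,6,7,8,11) nsS ns(1)] by blast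
  have o1: "mink n1 nt = 0" using n1(1) Sperp by (auto simp: mperp_def)
  have o2: "mink n2 nt = 0" using n2(1) Sperp by (auto simp: mperp_def)
  have e1: "\<gamma> \<circ> (rf ns \<circ> rf nt) = rf n1 \<circ> rf nt" using n1(3) by (metis comp_assoc)
  have e2: "(rf ns \<circ> rf nt) \<circ> \<gamma> = rf n2 \<circ> rf nt" using n2(3) comm by (metis comp_assoc)
  have S1: "hyp_orth (mperp {n1}) (axis \<gamma>)" "hyp_orth (mperp {n2}) (axis \<gamma>)"
    using n1(1) n2(1) H(10) by (auto simp: hyp_orth_def mperp_mperp_single span_minimal)
  show "\<exists>k1. hplane k1 \<and> (\<exists>s t. hhyperplane s \<and> hyp_orth s (axis \<gamma>) \<and>
          hhyperplane t \<and> axis \<gamma> \<subseteq> t \<and> k1 = s \<inter> t) \<and> \<gamma> = halfturn k1 \<circ> halfturn k"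
    apply (rule exI[of _ "mperp {n1, nt}"])
    using ht2(1)[OF n1(2) nt(1) o1] hyp1[OF n1(2)] S1 t nt(2) mperp2[of n1 nt]
      combine1[OF ns(1) nt(1) o n1(2) nt(1) o1 e1] kk by auto
  show "\<exists>k2. hplane k2 \<and> (\<exists>s t. hhyperplane s \<and> hyp_orth s (axis \<gamma>) \<and>
          hhyperplane t \<and> axis \<gamma> \<subseteq> t \<and> k2 = s \<inter> t) \<and> \<gamma> = halfturn k \<circ> halfturn k2"
    apply (rule exI[of _ "mperp {n2, nt}"])
    using ht2(1)[OF n2(2) nt(1) o2] hyp1[OF n2(2)] S1 t nt(2) mperp2[of n2 nt]
      combine2[OF ns(1) nt(1) o n2(2) nt(1) o2 e2] kk by auto
qed

lemma ell_fixes_eigen: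
  assumes e: "elliptic \<rho>" and v: "v \<noteq> 0" "mink v v = 0" and rv: "\<rho> v = a *\<^sub>R v"
  shows "a = 1"
proof -
  obtain z where z: "mink z z < 0" "\<rho> z = z" using e by (auto simp: elliptic_def)
  have iso: "isom \<rho>" using e by (simp add: elliptic_def orient_isom_isom)
  have "mink v z = mink (\<rho> v) (\<rho> z)" using iso by (simp add: isom_def)
  also have "\<dots> = a * mink v z" by (simp add: rv z mink_simps)
  finally have "(a - 1) * mink v z = 0" by (simp add: algebra_simps)
  moreover have "mink v z \<noteq> 0" using null_timelike_nonorth[OF v(2) v(1) z(1)] .
  ultimately show ?thesis by simp
qed

lemma caseL:
  assumes ph: "pure_hyperbolic \<tau>" and r: "elliptic_I \<rho>" and g1: "\<gamma> = \<tau> \<circ> \<rho>" and g2: "\<gamma> = \<rho> \<circ> \<tau>"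
    and s: "hhyperplane s" "hyp_orth s (axis \<tau>)"
    and t: "hhyperplane t" "fixspace \<rho> \<subseteq> t" and k: "k = s \<inter> t"
  shows "\<exists>k1. hplane k1 \<and> (\<exists>s t. hhyperplane s \<and> hyp_orth s (axis \<tau>) \<and>
          hhyperplane t \<and> fixspace \<rho> \<subseteq> t \<and> k1 = s \<inter> t) \<and> \<gamma> = halfturn k1 \<circ> halfturn k"
    "\<exists>k2. hplane k2 \<and> (\<exists>s t. hhyperplane s \<and> hyp_orth s (axis \<tau>) \<and>
          hhyperplane t \<and> fixspace \<rho> \<subseteq> t \<and> k2 = s \<inter> t) \<and> \<gamma> = halfturn k \<circ> halfturn k2"
proof -
  obtain u w c where H: "mink u u = 0" "mink w w = 0" "u \<noteq> 0" "w \<noteq> 0" "mink u w \<noteq> 0"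
    "\<tau> u = c *\<^sub>R u" "\<tau> w = (1/c) *\<^sub>R w" "c > 0" "c \<noteq> 1" "axis \<tau> = span {u, w}"
    "\<forall>v. mink v u = 0 \<and> mink v w = 0 \<longrightarrow> \<tau> v = v"
    "\<forall>v. v \<noteq> 0 \<and> mink v v = 0 \<and> \<tau> v = c *\<^sub>R v \<longrightarrow> (\<exists>a. v = a *\<^sub>R u)"
    "\<forall>v. v \<noteq> 0 \<and> mink v v = 0 \<and> \<tau> v = (1/c) *\<^sub>R v \<longrightarrow> (\<exists>a. v = a *\<^sub>R w)"
    using hyp_struct[OF ph] by blast
  let ?P = "fixspace \<rho>"
  have isoT: "isom \<tau>" using ph by (simp add: pure_hyperbolic_def loxodromic_def orient_isom_isom)
  have linT: "linear \<tau>" using isoT by (simp add: isom_def)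
  have er: "elliptic \<rho>" and P: "hplane ?P" using r by (auto simp: elliptic_I_def)
  have isoR: "isom \<rho>" using er by (simp add: elliptic_def orient_isom_isom)
  have linR: "linear \<rho>" and miR: "\<And>x y. mink (\<rho> x) (\<rho> y) = mink x y" using isoR by (auto simp: isom_def)
  have cm: "\<And>v. \<tau> (\<rho> v) = \<rho> (\<tau> v)" using g1 g2 by (metis comp_apply)
  have inj: "inj \<rho>" by (rule isom_inj[OF isoR])
  have ru: "\<rho> u = u"
  proof -
    have "\<rho> u \<noteq> 0" using inj H(3) linear_0[OF linR] by (metis injD)
    moreover have "mink (\<rho> u) (\<rho> u) = 0" using miR H(1) by simp
    moreover have "\<tau> (\<rho> u) = c *\<^sub>R \<rho> u" using cm H(6) linR by (simp add: linear_scale)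
    ultimately obtain a where a: "\<rho> u = a *\<^sub>R u" using H(12) by blast
    then have "a = 1" using ell_fixes_eigen[OF er H(3,1)] by simp
    then show ?thesis using a by simp
  qed
  have rw: "\<rho> w = w"
  proof -
    have "\<rho> w \<noteq> 0" using inj H(4) linear_0[OF linR] by (metis injD)
    moreover have "mink (\<rho> w) (\<rho> w) = 0" using miR H(2) by simp
    moreover have "\<tau> (\<rho> w) = (1/c) *\<^sub>R \<rho> w" using cm H(7) linR by (simp add: linear_scale)
    ultimately obtain a where a: "\<rho> w = a *\<^sub>R w" using H(13) by blast
    then have "a = 1" using ell_fixes_eigen[OF er H(4,2)] by simp
    then show ?thesis using a by simp
  qed
  have SP: "span {u, w} \<subseteq> ?P"
  proof -
    have "subspace ?P" using P by (simp add: hplane_def timelike_subspace_def)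
    moreover have "{u, w} \<subseteq> ?P" using ru rw by (simp add: fixspace_def)
    ultimately show ?thesis by (simp add: span_minimal)
  qed
  obtain ns where ns: "mink ns ns > 0" "s = mperp {ns}" using hyp_normal[OF s(1)] by blast
  obtain nt where nt: "mink nt nt > 0" "t = mperp {nt}" using hyp_normal[OF t(1)] by blast
  have nsS: "ns \<in> span {u, w}" using s(2) ns(2) in_own_perp[of ns] H(10) by (auto simp: hyp_orth_def)
  have ntP: "nt \<in> mperp ?P" using t(2) nt(2) by (auto simp: mperp_def mink_sym)
  have ntu: "mink nt u = 0" "mink nt w = 0" using ntP SP span_base[of u "{u,w}"] span_base[of w "{u,w}"]
    by (auto simp: mperp_def)
  have tnt: "\<tau> nt = nt" using H(11) ntu by blast
  have rns: "\<rho> ns = ns" using nsS SP by (auto simp: fixspace_def)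
  have o: "mink ns nt = 0" using nsS SP ntP by (auto simp: mperp_def mink_sym)
  have c1': "\<And>v. \<tau> (rf nt v) = rf nt (\<tau> v)" using rf_conj[OF isoT] tnt by simp
  have c2': "\<And>v. \<rho> (rf ns v) = rf ns (\<rho> v)" using rf_conj[OF isoR] rns by simp
  have kk: "k = mperp {ns, nt}" using k ns(2) nt(2) mperp2 by simp
  obtain a1 where a1: "a1 \<in> span {u, w}" "mink a1 a1 > 0" "\<tau> \<circ> rf ns = rf a1"
    using coreH[OF linT H(1,2,5,6,7,8,11) nsS ns(1)] by blast
  obtain a2 where a2: "a2 \<in> span {u, w}" "mink a2 a2 > 0" "rf ns \<circ> \<tau> = rf a2"
    using coreH_sym[OF isoT H(1,2,5,6,7,8,11) nsS ns(1)] by blast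
  obtain b1 where b1: "b1 \<in> mperp ?P" "mink b1 b1 > 0" "\<rho> \<circ> rf nt = rf b1"
    using core1[OF isoR P refl ntP nt(1)] by blast
  obtain b2 where b2: "b2 \<in> mperp ?P" "mink b2 b2 > 0" "rf nt \<circ> \<rho> = rf b2"
    using core1_sym[OF isoR P refl ntP nt(1)] by blast
  have o1: "mink a1 b1 = 0" using a1(1) SP b1(1) by (auto simp: mperp_def mink_sym)
  have o2: "mink a2 b2 = 0" using a2(1) SP b2(1) by (auto simp: mperp_def mink_sym)
  have e1: "\<gamma> \<circ> (rf ns \<circ> rf nt) = rf a1 \<circ> rf b1"
  proof -
    have "\<gamma> \<circ> (rf ns \<circ> rf nt) = \<tau> \<circ> (\<rho> \<circ> rf ns) \<circ> rf nt" by (simp add: g1 comp_assoc)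
    also have "\<dots> = (\<tau> \<circ> rf ns) \<circ> (\<rho> \<circ> rf nt)" by (simp add: fun_eq_iff c2')
    finally show ?thesis by (simp add: a1(3) b1(3))
  qed
  have e2: "(rf ns \<circ> rf nt) \<circ> \<gamma> = rf a2 \<circ> rf b2"
  proof -
    have "(rf ns \<circ> rf nt) \<circ> \<gamma> = rf ns \<circ> (rf nt \<circ> \<tau>) \<circ> \<rho>" by (simp add: g1 comp_assoc)
    also have "\<dots> = (rf ns \<circ> \<tau>) \<circ> (rf nt \<circ> \<rho>)" by (simp add: fun_eq_iff c1')
    finally show ?thesis by (simp add: a2(3) b2(3))
  qed
  have S1: "hyp_orth (mperp {a1}) (axis \<tau>)" "hyp_orth (mperp {a2}) (axis \<tau>)"
    using a1(1) a2(1) H(10) by (auto simp: hyp_orth_def mperp_mperp_single span_minimal)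
  have S2: "?P \<subseteq> mperp {b1}" "?P \<subseteq> mperp {b2}"
    using b1(1) b2(1) by (auto simp: mperp_def mink_sym)
  show "\<exists>k1. hplane k1 \<and> (\<exists>s t. hhyperplane s \<and> hyp_orth s (axis \<tau>) \<and>
          hhyperplane t \<and> fixspace \<rho> \<subseteq> t \<and> k1 = s \<inter> t) \<and> \<gamma> = halfturn k1 \<circ> halfturn k"
    apply (rule exI[of _ "mperp {a1, b1}"])
    using ht2(1)[OF a1(2) b1(2) o1] hyp1[OF a1(2)] hyp1[OF b1(2)] S1 S2 mperp2[of a1 b1]
      combine1[OF ns(1) nt(1) o a1(2) b1(2) o1 e1] kk by blast
  show "\<exists>k2. hplane k2 \<and> (\<exists>s t. hhyperplane s \<and> hyp_orth s (axis \<tau>) \<and>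
          hhyperplane t \<and> fixspace \<rho> \<subseteq> t \<and> k2 = s \<inter> t) \<and> \<gamma> = halfturn k \<circ> halfturn k2"
    apply (rule exI[of _ "mperp {a2, b2}"])
    using ht2(1)[OF a2(2) b2(2) o2] hyp1[OF a2(2)] hyp1[OF b2(2)] S1 S2 mperp2[of a2 b2]
      combine2[OF ns(1) nt(1) o a2(2) b2(2) o2 e2] kk by blast
qed



definition Fi :: "real^5" where "Fi = eucl_normal 0 1"
definition E0 :: "real^3 \<Rightarrow> real^5" where "E0 b = eucl_normal b 0"

lemma en_comp: "(eucl_normal a c)$0 = c" "(eucl_normal a c)$1 = a$1" "(eucl_normal a c)$2 = a$2"
  "(eucl_normal a c)$3 = a$3" "(eucl_normal a c)$4 = c"
  by (simp_all add: eucl_normal_def neq5[symmetric] neq5)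

lemma inner3: "(a::real^3) \<bullet> b = a$1 * b$1 + a$2 * b$2 + a$3 * b$3"
  by (simp add: inner_vec_def sum_3)

lemma en_dec: "eucl_normal a c = E0 a + c *\<^sub>R Fi"
  by (simp add: vec5_eq E0_def Fi_def en_comp)

lemma mink_en: "mink (eucl_normal a c) (eucl_normal a' c') = a \<bullet> a'"
  by (simp add: mink_def en_comp inner3)

lemma mink_FF: "mink Fi Fi = 0" and mink_EF: "mink (E0 a) Fi = 0" "mink Fi (E0 a) = 0"
  and mink_EE: "mink (E0 a) (E0 a') = a \<bullet> a'"
  by (simp_all add: Fi_def E0_def mink_en)

lemma E0_scale: "E0 (l *\<^sub>R b) = l *\<^sub>R E0 b"
  by (simp add: vec5_eq E0_def en_comp)

lemma Fi_nz: "Fi \<noteq> 0"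
  by (simp add: Fi_def vec5_eq en_comp)

lemma mink_e0_Fi: "mink e0 Fi = -1"
  by (simp add: mink_def e0_def Fi_def en_comp neq5[symmetric] neq5)

lemma mink_e0_E0: "mink e0 (E0 b) = 0"
  by (simp add: mink_def e0_def E0_def en_comp neq5[symmetric] neq5)

lemma PT: "par_transl b v = v - mink v Fi *\<^sub>R (E0 b + ((b \<bullet> b)/2) *\<^sub>R Fi) + mink v (E0 b) *\<^sub>R Fi"
  by (simp add: vec5_eq par_transl_def Let_def mink_def E0_def Fi_def en_comp neq5 neq5[symmetric] algebra_simps)

lemma PT_rf:
  assumes a: "a = l *\<^sub>R b" "a \<noteq> 0"
  shows "par_transl b \<circ> rf (eucl_normal a c) = rf (eucl_normal a (c + (a \<bullet> b)/2))"
proof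
  fix v
  let ?E = "E0 b" and ?F = Fi
  define \<beta> where "\<beta> = b \<bullet> b"
  have l0: "l \<noteq> 0" and b0: "b \<noteq> 0" using a by auto
  have bp: "\<beta> > 0" using b0 by (simp add: \<beta>_def)
  define p where "p = mink v ?E"
  define q where "q = mink v ?F"
  define c' where "c' = c + l * \<beta> / 2"
  have ab: "(a \<bullet> b)/2 = l * \<beta> / 2" by (simp add: a \<beta>_def)
  have e: "eucl_normal a c = l *\<^sub>R ?E + c *\<^sub>R ?F" by (simp add: en_dec a E0_scale)
  have e': "eucl_normal a (c + (a \<bullet> b)/2) = l *\<^sub>R ?E + c' *\<^sub>R ?F" by (simp add: en_dec a E0_scale c'_def \<beta>_def)
  have FE: "mink ?F ?E = 0" by (rule mink_EF)
  have EE: "mink ?E ?E = \<beta>" by (simp add: mink_EE \<beta>_def)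
  have ee: "mink (l *\<^sub>R ?E + c *\<^sub>R ?F) (l *\<^sub>R ?E + c *\<^sub>R ?F) = l*l*\<beta>"
    by (simp add: mink_simps mink_FF mink_EF EE)
  have ee': "mink (l *\<^sub>R ?E + c' *\<^sub>R ?F) (l *\<^sub>R ?E + c' *\<^sub>R ?F) = l*l*\<beta>"
    by (simp add: mink_simps mink_FF mink_EF EE)
  have ve: "mink v (l *\<^sub>R ?E + c *\<^sub>R ?F) = l*p + c*q" by (simp add: mink_simps p_def q_def)
  have ve': "mink v (l *\<^sub>R ?E + c' *\<^sub>R ?F) = l*p + c'*q" by (simp add: mink_simps p_def q_def)
  define \<kappa> where "\<kappa> = 2 * (l*p + c*q) / (l*l*\<beta>)"
  define \<kappa>' where "\<kappa>' = 2 * (l*p + c'*q) / (l*l*\<beta>)"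
  have w: "rf (eucl_normal a c) v = v - \<kappa> *\<^sub>R (l *\<^sub>R ?E + c *\<^sub>R ?F)"
    unfolding e rf_def ee ve \<kappa>_def ..
  have wF: "mink (rf (eucl_normal a c) v) ?F = q"
    unfolding w by (simp add: mink_simps mink_FF mink_EF q_def)
  have wE: "mink (rf (eucl_normal a c) v) ?E = p - \<kappa> * l * \<beta>"
    unfolding w by (simp add: mink_simps FE EE p_def)
  have "(par_transl b \<circ> rf (eucl_normal a c)) v =
      v - \<kappa> *\<^sub>R (l *\<^sub>R ?E + c *\<^sub>R ?F) - q *\<^sub>R (?E + (\<beta>/2) *\<^sub>R ?F) + (p - \<kappa> * l * \<beta>) *\<^sub>R ?F"
    unfolding comp_apply PT wF wE \<beta>_def[symmetric] by (simp only: w)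
  also have "\<dots> = v - \<kappa>' *\<^sub>R (l *\<^sub>R ?E + c' *\<^sub>R ?F)"
    using l0 bp by (simp add: vec_eq_iff \<kappa>_def \<kappa>'_def c'_def field_simps)
  also have "\<dots> = rf (eucl_normal a (c + (a \<bullet> b)/2)) v"
    unfolding e' rf_def ee' ve' \<kappa>'_def ..
  finally show "(par_transl b \<circ> rf (eucl_normal a c)) v = rf (eucl_normal a (c + (a \<bullet> b)/2)) v" .
qed



lemma image_mperp:
  assumes g: "isom g" shows "g ` mperp {e} = mperp {g e}"
proof
  have mi: "\<And>x y. mink (g x) (g y) = mink x y" using g by (simp add: isom_def)
  show "g ` mperp {e} \<subseteq> mperp {g e}" by (auto simp: mperp_def mi)
  show "mperp {g e} \<subseteq> g ` mperp {e}"
  proof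
    fix x assume x: "x \<in> mperp {g e}"
    have gx: "g (inv g x) = x" by (rule inv_pre[OF g])
    have "mink (inv g x) e = mink (g (inv g x)) (g e)" by (simp add: mi)
    then have "inv g x \<in> mperp {e}" using x gx by (simp add: mperp_def)
    then show "x \<in> g ` mperp {e}" using gx by (metis image_eqI)
  qed
qed

lemma inv_g_g: "isom g \<Longrightarrow> inv g (g x) = x"
  by (simp add: isom_inj)

lemma tau_rf:
  assumes pc: "par_conj \<tau> g b" and a: "a = l *\<^sub>R b" "a \<noteq> 0"
  shows "\<tau> \<circ> rf (g (eucl_normal a c)) = rf (g (eucl_normal a (c + (a \<bullet> b)/2)))"
proof
  fix x
  have g: "isom g" and t: "\<tau> = g \<circ> par_transl b \<circ> inv g" using pc by (auto simp: par_conj_def orient_isom_isom)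
  have gx: "g (inv g x) = x" by (rule inv_pre[OF g])
  have "rf (g (eucl_normal a c)) x = g (rf (eucl_normal a c) (inv g x))"
    using rf_conj[OF g, of "eucl_normal a c" "inv g x"] gx by simp
  then have "(\<tau> \<circ> rf (g (eucl_normal a c))) x = g (par_transl b (rf (eucl_normal a c) (inv g x)))"
    by (simp add: t inv_g_g[OF g])
  also have "\<dots> = g (rf (eucl_normal a (c + (a \<bullet> b)/2)) (inv g x))"
    using fun_cong[OF PT_rf[OF a, of c], of "inv g x"] by simp
  also have "\<dots> = rf (g (eucl_normal a (c + (a \<bullet> b)/2))) x"
    using rf_conj[OF g] gx by simp
  finally show "(\<tau> \<circ> rf (g (eucl_normal a c))) x = rf (g (eucl_normal a (c + (a \<bullet> b)/2))) x" .
qed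

lemma mink_g_en:
  assumes "isom g"
  shows "mink (g (eucl_normal a c)) (g (eucl_normal a' c')) = a \<bullet> a'"
  using assms by (simp add: isom_def mink_en)

lemma rf_tau:
  assumes pc: "par_conj \<tau> g b" and a: "a = l *\<^sub>R b" "a \<noteq> 0"
  shows "rf (g (eucl_normal a c)) \<circ> \<tau> = rf (g (eucl_normal a (c - (a \<bullet> b)/2)))"
proof -
  have g: "isom g" using pc by (auto simp: par_conj_def orient_isom_isom)
  let ?e = "g (eucl_normal a c)" and ?e2 = "g (eucl_normal a (c - (a \<bullet> b)/2))"
  have t: "\<tau> \<circ> rf ?e2 = rf ?e" using tau_rf[OF pc a, of "c - (a \<bullet> b)/2"] by simp
  have N: "mink ?e ?e \<noteq> 0" "mink ?e2 ?e2 \<noteq> 0" using mink_g_en[OF g] a(2) by simp_all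
  show ?thesis
  proof
    fix x
    have "(rf ?e \<circ> \<tau>) x = rf ?e (\<tau> (rf ?e2 (rf ?e2 x)))" using N by (simp add: rf_rf)
    also have "\<dots> = rf ?e (rf ?e (rf ?e2 x))" using fun_cong[OF t, of "rf ?e2 x"] by simp
    also have "\<dots> = rf ?e2 x" using N by (simp add: rf_rf)
    finally show "(rf ?e \<circ> \<tau>) x = rf ?e2 x" .
  qed
qed

lemma PT_fix:
  assumes "mink v Fi = 0" "mink v (E0 b) = 0"
  shows "par_transl b v = v"
  using assms by (simp add: PT)

lemma tau_fix:
  assumes pc: "par_conj \<tau> g b" and ab: "inv g v \<in> mperp {Fi, E0 b}"
  shows "\<tau> v = v"
proof -
  have g: "isom g" and t: "\<tau> = g \<circ> par_transl b \<circ> inv g" using pc by (auto simp: par_conj_def orient_isom_isom)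
  have "par_transl b (inv g v) = inv g v" using ab by (intro PT_fix) (auto simp: mperp_def)
  then show ?thesis using t inv_pre[OF g] by simp
qed

lemma parF_normal:
  assumes g: "isom g" and s: "s \<in> parF g b"
  shows "\<exists>a c l. a \<noteq> 0 \<and> a = l *\<^sub>R b \<and> s = mperp {g (eucl_normal a c)}"
  using s image_mperp[OF g] by (auto simp: parF_def eucl_plane_hyp_def)

lemma parT_normal:
  assumes g: "isom g" and t: "t \<in> parT g b"
  shows "\<exists>a c. a \<noteq> 0 \<and> a \<bullet> b = 0 \<and> t = mperp {g (eucl_normal a c)}"
  using t image_mperp[OF g] by (auto simp: parT_def eucl_plane_hyp_def)

lemma parF_mem:
  assumes g: "isom g" and "a \<noteq> 0" "a = l *\<^sub>R b"
  shows "mperp {g (eucl_normal a c)} \<in> parF g b"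
  using assms image_mperp[OF g, of "eucl_normal a c"] unfolding parF_def eucl_plane_hyp_def by blast

lemma isom_PT: "isom (par_transl b)"
proof -
  let ?E = "E0 b" and ?F = Fi
  have l1: "\<And>a c. linear (\<lambda>v. mink v a *\<^sub>R c)"
    by (rule linearI) (simp_all add: mink_simps scaleR_add_left)
  have lin: "linear (par_transl b)"
    unfolding PT[abs_def]
    by (intro linear_compose_add linear_compose_sub linear_ident l1)
  have m3: "\<And>x y a c d e B F. mink (x - a *\<^sub>R B + c *\<^sub>R F) (y - d *\<^sub>R B + e *\<^sub>R F) =
     mink x y - d * mink x B + e * mink x F - a * mink B y + a*d*mink B B - a*e*mink B F
     + c*mink F y - c*d*mink F B + c*e*mink F F"
    by (simp add: mink_simps algebra_simps)
  have "mink (par_transl b x) (par_transl b y) = mink x y" for x y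
  proof -
    define B where "B = ?E + ((b \<bullet> b)/2) *\<^sub>R ?F"
    have BB: "mink B B = b \<bullet> b" "mink B ?F = 0" "mink ?F B = 0"
      by (simp_all add: B_def mink_simps mink_FF mink_EF mink_EE)
    have xB: "mink z B = mink z ?E + ((b \<bullet> b)/2) * mink z ?F" for z
      by (simp add: B_def mink_simps)
    have Bz: "mink B z = mink z ?E + ((b \<bullet> b)/2) * mink z ?F" for z
      by (simp add: B_def mink_simps mink_sym[of "E0 b" z] mink_sym[of Fi z])
    have Fz: "mink ?F z = mink z ?F" for z by (rule mink_sym)
    define \<beta> where "\<beta> = b \<bullet> b"
    have pt: "\<And>v. par_transl b v = v - mink v ?F *\<^sub>R B + mink v ?E *\<^sub>R ?F"
      by (simp add: PT B_def)
    have "mink (par_transl b x) (par_transl b y) =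
       mink x y - mink y ?F * mink x B + mink y ?E * mink x ?F - mink x ?F * mink B y
       + mink x ?F * mink y ?F * mink B B - mink x ?F * mink y ?E * mink B ?F
       + mink x ?E * mink ?F y - mink x ?E * mink y ?F * mink ?F B + mink x ?E * mink y ?E * mink ?F ?F"
      unfolding pt by (rule m3)
    also have "\<dots> = mink x y - mink y ?F * (mink x ?E + (\<beta>/2) * mink x ?F) + mink y ?E * mink x ?F
       - mink x ?F * (mink y ?E + (\<beta>/2) * mink y ?F) + mink x ?F * mink y ?F * \<beta>
       + mink x ?E * mink y ?F"
      by (simp only: BB xB[of x] Bz[of y] Fz[of y] mink_FF \<beta>_def mult_zero_right mult_zero_left add_0_right diff_0_right)
    also have "\<dots> = mink x y" by (simp add: algebra_simps)
    finally show ?thesis .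
  qed
  then show ?thesis using lin by (simp add: isom_def)
qed

lemma isom_par_conj: "par_conj \<tau> g b \<Longrightarrow> isom \<tau>"
  unfolding par_conj_def
  by (metis isom_PT isom_comp isom_inv orient_isom_isom)

lemma caseP:
  assumes pc: "par_conj \<gamma> g b" and s: "s \<in> parF g b" and t: "t \<in> parT g b" and k: "k = s \<inter> t"
  shows "\<exists>k1. hplane k1 \<and> (\<exists>s\<in>parF g b. \<exists>t\<in>parT g b. k1 = s \<inter> t) \<and> \<gamma> = halfturn k1 \<circ> halfturn k"
    "\<exists>k2. hplane k2 \<and> (\<exists>s\<in>parF g b. \<exists>t\<in>parT g b. k2 = s \<inter> t) \<and> \<gamma> = halfturn k \<circ> halfturn k2"
proof -
  have g: "isom g" using pc by (auto simp: par_conj_def orient_isom_isom)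
  obtain a c l where A: "a \<noteq> 0" "a = l *\<^sub>R b" "s = mperp {g (eucl_normal a c)}"
    using parF_normal[OF g s] by blast
  obtain a' c' where A': "a' \<noteq> 0" "a' \<bullet> b = 0" "t = mperp {g (eucl_normal a' c')}"
    using parT_normal[OF g t] by blast
  let ?ns = "g (eucl_normal a c)" and ?nt = "g (eucl_normal a' c')"
  let ?n1 = "g (eucl_normal a (c + (a \<bullet> b)/2))" and ?n2 = "g (eucl_normal a (c - (a \<bullet> b)/2))"
  have aa': "a \<bullet> a' = 0" using A(2) A'(2) by (simp add: inner_commute)
  have Ns: "mink ?ns ?ns > 0" "mink ?n1 ?n1 > 0" "mink ?n2 ?n2 > 0" using mink_g_en[OF g] A(1) by simp_all
  have Nt: "mink ?nt ?nt > 0" using mink_g_en[OF g] A'(1) by simp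
  have o: "mink ?ns ?nt = 0" "mink ?n1 ?nt = 0" "mink ?n2 ?nt = 0" using mink_g_en[OF g] aa' by simp_all
  have iso: "isom \<gamma>" using pc by (rule isom_par_conj)
  have gnt: "\<gamma> ?nt = ?nt"
  proof (rule tau_fix[OF pc])
    show "inv g ?nt \<in> mperp {Fi, E0 b}"
      using A'(2) by (simp add: inv_g_g[OF g] mperp_def Fi_def E0_def mink_en inner_commute)
  qed
  have comm: "\<gamma> \<circ> rf ?nt = rf ?nt \<circ> \<gamma>" by (rule rf_fix_commute[OF iso gnt])
  have kk: "k = mperp {?ns, ?nt}" using k A(3) A'(3) mperp2 by simp
  have e1: "\<gamma> \<circ> (rf ?ns \<circ> rf ?nt) = rf ?n1 \<circ> rf ?nt" using tau_rf[OF pc A(2,1), of c] by (metis comp_assoc)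
  have e2: "(rf ?ns \<circ> rf ?nt) \<circ> \<gamma> = rf ?n2 \<circ> rf ?nt"
    using rf_tau[OF pc A(2,1), of c] comm by (metis comp_assoc)
  show "\<exists>k1. hplane k1 \<and> (\<exists>s\<in>parF g b. \<exists>t\<in>parT g b. k1 = s \<inter> t) \<and> \<gamma> = halfturn k1 \<circ> halfturn k"
    apply (rule exI[of _ "mperp {?n1, ?nt}"])
    using ht2(1)[OF Ns(2) Nt o(2)] parF_mem[OF g A(1,2)] t A'(3) mperp2[of ?n1 ?nt]
      combine1[OF Ns(1) Nt o(1) Ns(2) Nt o(2) e1] kk by blast
  show "\<exists>k2. hplane k2 \<and> (\<exists>s\<in>parF g b. \<exists>t\<in>parT g b. k2 = s \<inter> t) \<and> \<gamma> = halfturn k \<circ> halfturn k2"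
    apply (rule exI[of _ "mperp {?n2, ?nt}"])
    using ht2(1)[OF Ns(3) Nt o(3)] parF_mem[OF g A(1,2)] t A'(3) mperp2[of ?n2 ?nt]
      combine2[OF Ns(1) Nt o(1) Ns(3) Nt o(3) e2] kk by blast
qed



lemma screw_fix:
  assumes pc: "par_conj \<tau> g b" and iso: "isom \<rho>" and z: "mink z z < 0" "\<rho> z = z"
    and cm: "\<And>v. \<tau> (\<rho> v) = \<rho> (\<tau> v)"
  shows "\<rho> (g Fi) = g Fi" "\<rho> (g (E0 b)) = g (E0 b)"
proof -
  have g: "isom g" and t: "\<tau> = g \<circ> par_transl b \<circ> inv g" and b0: "b \<noteq> 0"
    using pc by (auto simp: par_conj_def orient_isom_isom)
  have ig: "isom (inv g)" by (rule isom_inv[OF g])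
  define \<rho>' where "\<rho>' = inv g \<circ> \<rho> \<circ> g"
  have iso': "isom \<rho>'" unfolding \<rho>'_def by (intro isom_comp ig iso g)
  have lin': "linear \<rho>'" and mi': "\<And>x y. mink (\<rho>' x) (\<rho>' y) = mink x y" using iso' by (auto simp: isom_def)
  have gi: "\<And>x. g (inv g x) = x" by (rule inv_pre[OF g])
  have ig2: "\<And>x. inv g (g x) = x" by (rule inv_g_g[OF g])
  have gr: "\<And>v. g (\<rho>' v) = \<rho> (g v)" by (simp add: \<rho>'_def gi)
  have tg: "\<And>v. \<tau> (g v) = g (par_transl b v)" by (simp add: t ig2)
  have cm': "\<And>v. \<rho>' (par_transl b v) = par_transl b (\<rho>' v)"
  proof -
    fix v
    have "\<rho>' (par_transl b v) = inv g (\<rho> (\<tau> (g v)))" by (simp add: \<rho>'_def tg)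
    also have "\<dots> = inv g (\<tau> (\<rho> (g v)))" by (simp add: cm)
    also have "\<dots> = inv g (\<tau> (g (\<rho>' v)))" by (simp add: gr)
    also have "\<dots> = par_transl b (\<rho>' v)" by (simp add: tg ig2)
    finally show "\<rho>' (par_transl b v) = par_transl b (\<rho>' v)" .
  qed
  define z' where "z' = inv g z"
  have z'1: "mink z' z' < 0" using ig z(1) by (simp add: z'_def isom_def)
  have z'2: "\<rho>' z' = z'" by (simp add: \<rho>'_def z'_def gi z(2))
  let ?E = "E0 b" and ?F = Fi
  define \<beta> where "\<beta> = b \<bullet> b"
  have bp: "\<beta> > 0" using b0 by (simp add: \<beta>_def)
  define B where "B = ?E + (\<beta>/2) *\<^sub>R ?F"
  define N where "N v = - mink v ?F *\<^sub>R B + mink v ?E *\<^sub>R ?F" for v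
  have PTN: "\<And>v. par_transl b v = v + N v" by (simp add: PT N_def B_def \<beta>_def)
  have linN: "\<And>x y. N (x + y) = N x + N y" "\<And>c x. N (c *\<^sub>R x) = c *\<^sub>R N x"
    by (simp_all add: N_def mink_simps algebra_simps)
  have cmN: "\<And>v. \<rho>' (N v) = N (\<rho>' v)"
  proof -
    fix v
    have "\<rho>' v + \<rho>' (N v) = \<rho>' v + N (\<rho>' v)" using cm'[of v] lin' by (simp add: PTN linear_add)
    then show "\<rho>' (N v) = N (\<rho>' v)" by simp
  qed
  have BF: "mink B ?F = 0" "mink ?F B = 0" by (simp_all add: B_def mink_simps mink_FF mink_EF)
  have BE: "mink B ?E = \<beta>" by (simp add: B_def mink_simps mink_EE mink_EF \<beta>_def)
  have Ne0: "N e0 = B" by (simp add: N_def mink_e0_Fi mink_e0_E0)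
  have NB: "N B = \<beta> *\<^sub>R ?F" by (simp add: N_def BF BE)
  define lam where "lam = - mink (\<rho>' e0) ?F"
  define mu where "mu = mink (\<rho>' e0) ?E"
  have "\<rho>' B = N (\<rho>' e0)" using cmN[of e0] Ne0 by simp
  then have rB: "\<rho>' B = lam *\<^sub>R B + mu *\<^sub>R ?F" by (simp add: N_def lam_def mu_def)
  have "\<rho>' (N B) = N (\<rho>' B)" by (rule cmN)
  then have "\<beta> *\<^sub>R \<rho>' ?F = lam *\<^sub>R N B + mu *\<^sub>R N ?F"
    using lin' by (simp add: NB rB linN linear_scale)
  moreover have "N ?F = 0" by (simp add: N_def mink_FF mink_sym[of Fi "E0 b"] mink_EF)
  ultimately have "\<beta> *\<^sub>R \<rho>' ?F = (lam * \<beta>) *\<^sub>R ?F" by (simp add: NB)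
  then have rF: "\<rho>' ?F = lam *\<^sub>R ?F" using bp
    by (metis (no_types, lifting) mult.commute scaleR_scaleR scaleR_cancel_left order_less_irrefl)
  have Fz: "mink ?F z' \<noteq> 0" by (rule null_timelike_nonorth[OF mink_FF Fi_nz z'1])
  have "mink ?F z' = mink (\<rho>' ?F) (\<rho>' z')" by (simp add: mi')
  also have "\<dots> = lam * mink ?F z'" by (simp add: rF z'2 mink_simps)
  finally have l1: "lam = 1" using Fz by simp
  have "mink B z' = mink (\<rho>' B) (\<rho>' z')" by (simp add: mi')
  also have "\<dots> = mink B z' + mu * mink ?F z'" by (simp add: rB z'2 l1 mink_simps)
  finally have m0: "mu = 0" using Fz by simp
  have rF1: "\<rho>' ?F = ?F" using rF l1 by simp
  have rB1: "\<rho>' B = B" using rB l1 m0 by simp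
  have "\<rho>' ?E = \<rho>' (B - (\<beta>/2) *\<^sub>R ?F)" by (simp add: B_def)
  also have "\<dots> = \<rho>' B - (\<beta>/2) *\<^sub>R \<rho>' ?F" using lin' by (simp add: linear_diff linear_scale)
  also have "\<dots> = B - (\<beta>/2) *\<^sub>R ?F" by (simp only: rB1 rF1)
  also have "\<dots> = ?E" by (simp add: B_def)
  finally have rE1: "\<rho>' ?E = ?E" .
  show "\<rho> (g Fi) = g Fi" using gr[of Fi] rF1 by simp
  show "\<rho> (g (E0 b)) = g (E0 b)" using gr[of "E0 b"] rE1 by simp
qed

lemma caseS:
  assumes pc: "par_conj \<tau> g b" and r: "elliptic_I \<rho>" and g1: "\<gamma> = \<tau> \<circ> \<rho>" and g2: "\<gamma> = \<rho> \<circ> \<tau>"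
    and s: "s \<in> parF g b" and t: "hhyperplane t" "fixspace \<rho> \<subseteq> t" and k: "k = s \<inter> t"
  shows "\<exists>k1. hplane k1 \<and> (\<exists>s\<in>parF g b. \<exists>t. hhyperplane t \<and> fixspace \<rho> \<subseteq> t \<and> k1 = s \<inter> t)
           \<and> \<gamma> = halfturn k1 \<circ> halfturn k"
    "\<exists>k2. hplane k2 \<and> (\<exists>s\<in>parF g b. \<exists>t. hhyperplane t \<and> fixspace \<rho> \<subseteq> t \<and> k2 = s \<inter> t)
           \<and> \<gamma> = halfturn k \<circ> halfturn k2"
proof -
  let ?P = "fixspace \<rho>"
  have g: "isom g" using pc by (auto simp: par_conj_def orient_isom_isom)
  have lg: "linear g" using g by (simp add: isom_def)
  have isoT: "isom \<tau>" using pc by (rule isom_par_conj)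
  have er: "elliptic \<rho>" and P: "hplane ?P" using r by (auto simp: elliptic_I_def)
  have isoR: "isom \<rho>" using er by (simp add: elliptic_def orient_isom_isom)
  have linR: "linear \<rho>" using isoR by (simp add: isom_def)
  obtain z where z: "mink z z < 0" "\<rho> z = z" using er by (auto simp: elliptic_def)
  have cm: "\<And>v. \<tau> (\<rho> v) = \<rho> (\<tau> v)" using g1 g2 by (metis comp_apply)
  have fF: "\<rho> (g Fi) = g Fi" and fE: "\<rho> (g (E0 b)) = g (E0 b)" using screw_fix[OF pc isoR z cm] by auto
  obtain a c l where A: "a \<noteq> 0" "a = l *\<^sub>R b" "s = mperp {g (eucl_normal a c)}"
    using parF_normal[OF g s] by blast
  have fixall: "\<And>c'. \<rho> (g (eucl_normal a c')) = g (eucl_normal a c')"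
  proof -
    fix c'
    have "g (eucl_normal a c') = l *\<^sub>R g (E0 b) + c' *\<^sub>R g Fi"
      using lg by (simp add: en_dec A(2) E0_scale linear_add linear_scale)
    then show "\<rho> (g (eucl_normal a c')) = g (eucl_normal a c')"
      using linR fF fE by (simp add: linear_add linear_scale)
  qed
  have inP: "\<And>c'. g (eucl_normal a c') \<in> ?P" using fixall by (simp add: fixspace_def)
  obtain nt where nt: "mink nt nt > 0" "t = mperp {nt}" using hyp_normal[OF t(1)] by blast
  have ntP: "nt \<in> mperp ?P" using t(2) nt(2) by (auto simp: mperp_def mink_sym)
  have gFP: "g Fi \<in> ?P" "g (E0 b) \<in> ?P" using fF fE by (simp_all add: fixspace_def)
  have mi: "\<And>x y. mink (g x) (g y) = mink x y" using g by (simp add: isom_def)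
  have tnt: "\<tau> nt = nt"
  proof (rule tau_fix[OF pc])
    have "mink (inv g nt) Fi = mink nt (g Fi)" "mink (inv g nt) (E0 b) = mink nt (g (E0 b))"
      using mi[of "inv g nt"] inv_pre[OF g] by simp_all
    then show "inv g nt \<in> mperp {Fi, E0 b}" using ntP gFP by (auto simp: mperp_def)
  qed
  let ?ns = "g (eucl_normal a c)"
  let ?n1 = "g (eucl_normal a (c + (a \<bullet> b)/2))" and ?n2 = "g (eucl_normal a (c - (a \<bullet> b)/2))"
  have Ns: "mink ?ns ?ns > 0" "mink ?n1 ?n1 > 0" "mink ?n2 ?n2 > 0" using mink_g_en[OF g] A(1) by simp_all
  have o: "mink ?ns nt = 0" using inP[of c] ntP by (auto simp: mperp_def mink_sym)
  have c1': "\<And>v. \<tau> (rf nt v) = rf nt (\<tau> v)" using rf_conj[OF isoT] tnt by simp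
  have c2': "\<And>v. \<rho> (rf ?ns v) = rf ?ns (\<rho> v)" using rf_conj[OF isoR] fixall by simp
  have kk: "k = mperp {?ns, nt}" using k A(3) nt(2) mperp2 by simp
  obtain b1 where b1: "b1 \<in> mperp ?P" "mink b1 b1 > 0" "\<rho> \<circ> rf nt = rf b1"
    using core1[OF isoR P refl ntP nt(1)] by blast
  obtain b2 where b2: "b2 \<in> mperp ?P" "mink b2 b2 > 0" "rf nt \<circ> \<rho> = rf b2"
    using core1_sym[OF isoR P refl ntP nt(1)] by blast
  have o1: "mink ?n1 b1 = 0" using inP b1(1) by (auto simp: mperp_def mink_sym)
  have o2: "mink ?n2 b2 = 0" using inP b2(1) by (auto simp: mperp_def mink_sym)
  have e1: "\<gamma> \<circ> (rf ?ns \<circ> rf nt) = rf ?n1 \<circ> rf b1"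
  proof -
    have "\<gamma> \<circ> (rf ?ns \<circ> rf nt) = \<tau> \<circ> (\<rho> \<circ> rf ?ns) \<circ> rf nt" by (simp add: g1 comp_assoc)
    also have "\<dots> = (\<tau> \<circ> rf ?ns) \<circ> (\<rho> \<circ> rf nt)" by (simp add: fun_eq_iff c2')
    finally show ?thesis by (simp add: tau_rf[OF pc A(2,1)] b1(3))
  qed
  have e2: "(rf ?ns \<circ> rf nt) \<circ> \<gamma> = rf ?n2 \<circ> rf b2"
  proof -
    have "(rf ?ns \<circ> rf nt) \<circ> \<gamma> = rf ?ns \<circ> (rf nt \<circ> \<tau>) \<circ> \<rho>" by (simp add: g1 comp_assoc)
    also have "\<dots> = (rf ?ns \<circ> \<tau>) \<circ> (rf nt \<circ> \<rho>)" by (simp add: fun_eq_iff c1')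
    finally show ?thesis by (simp add: rf_tau[OF pc A(2,1)] b2(3))
  qed
  have S2: "?P \<subseteq> mperp {b1}" "?P \<subseteq> mperp {b2}"
    using b1(1) b2(1) by (auto simp: mperp_def mink_sym)
  show "\<exists>k1. hplane k1 \<and> (\<exists>s\<in>parF g b. \<exists>t. hhyperplane t \<and> fixspace \<rho> \<subseteq> t \<and> k1 = s \<inter> t)
           \<and> \<gamma> = halfturn k1 \<circ> halfturn k"
    apply (rule exI[of _ "mperp {?n1, b1}"])
    using ht2(1)[OF Ns(2) b1(2) o1] parF_mem[OF g A(1,2)] hyp1[OF b1(2)] S2 mperp2[of ?n1 b1]
      combine1[OF Ns(1) nt(1) o Ns(2) b1(2) o1 e1] kk by blast
  show "\<exists>k2. hplane k2 \<and> (\<exists>s\<in>parF g b. \<exists>t. hhyperplane t \<and> fixspace \<rho> \<subseteq> t \<and> k2 = s \<inter> t)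
           \<and> \<gamma> = halfturn k \<circ> halfturn k2"
    apply (rule exI[of _ "mperp {?n2, b2}"])
    using ht2(1)[OF Ns(3) b2(2) o2] parF_mem[OF g A(1,2)] hyp1[OF b2(2)] S2 mperp2[of ?n2 b2]
      combine2[OF Ns(1) nt(1) o Ns(3) b2(2) o2 e2] kk by blast
qed



lemma bank_inv: "hplane W \<Longrightarrow> elliptic_II h \<Longrightarrow> h \<circ> h = id \<Longrightarrow> fixspace h \<subseteq> W \<Longrightarrow> W \<in> bank h"
  by (simp add: bank_def)
lemma bank_I: "hplane W \<Longrightarrow> elliptic_I h \<Longrightarrow> (\<exists>s t. hhyperplane s \<and> fixspace h \<subseteq> s \<and>
          hhyperplane t \<and> hyp_orth t (fixspace h) \<and> W = s \<inter> t) \<Longrightarrow> W \<in> bank h"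
  by (simp add: bank_def)
lemma bank_H: "hplane W \<Longrightarrow> pure_hyperbolic h \<Longrightarrow> (\<exists>s t. hhyperplane s \<and> hyp_orth s (axis h) \<and>
          hhyperplane t \<and> axis h \<subseteq> t \<and> W = s \<inter> t) \<Longrightarrow> W \<in> bank h"
  by (simp add: bank_def)
lemma bank_P: "hplane W \<Longrightarrow> pure_parabolic h \<Longrightarrow> par_conj h g b \<Longrightarrow>
          (\<exists>s\<in>parF g b. \<exists>t\<in>parT g b. W = s \<inter> t) \<Longrightarrow> W \<in> bank h"
  unfolding bank_def mem_Collect_eq by (intro conjI disjI2 disjI1) blast+
lemma bank_L: "hplane W \<Longrightarrow> pure_loxodromic h \<Longrightarrow> pure_hyperbolic \<tau> \<Longrightarrow> elliptic_I \<rho> \<Longrightarrow>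
          h = \<tau> \<circ> \<rho> \<Longrightarrow> h = \<rho> \<circ> \<tau> \<Longrightarrow>
          (\<exists>s t. hhyperplane s \<and> hyp_orth s (axis \<tau>) \<and>
                 hhyperplane t \<and> fixspace \<rho> \<subseteq> t \<and> W = s \<inter> t) \<Longrightarrow> W \<in> bank h"
  unfolding bank_def mem_Collect_eq by (intro conjI disjI2 disjI1) blast+
lemma bank_S: "hplane W \<Longrightarrow> screw_parabolic h \<Longrightarrow> par_conj \<tau> g b \<Longrightarrow> elliptic_I \<rho> \<Longrightarrow>
          h = \<tau> \<circ> \<rho> \<Longrightarrow> h = \<rho> \<circ> \<tau> \<Longrightarrow>
          (\<exists>s\<in>parF g b. \<exists>t. hhyperplane t \<and> fixspace \<rho> \<subseteq> t \<and> W = s \<inter> t) \<Longrightarrow> W \<in> bank h"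
  unfolding bank_def mem_Collect_eq by (intro conjI disjI2 disjI1) blast+
lemma bank_II: "hplane W \<Longrightarrow> elliptic_II h \<Longrightarrow> h \<circ> h \<noteq> id \<Longrightarrow> elliptic_I \<rho>1 \<Longrightarrow> elliptic_I \<rho>2 \<Longrightarrow>
          h = \<rho>1 \<circ> \<rho>2 \<Longrightarrow> h = \<rho>2 \<circ> \<rho>1 \<Longrightarrow>
          fixspace \<rho>1 \<inter> fixspace \<rho>2 = fixspace h \<Longrightarrow> mperp (fixspace \<rho>1) \<subseteq> fixspace \<rho>2 \<Longrightarrow>
          (\<exists>s t. hhyperplane s \<and> fixspace \<rho>1 \<subseteq> s \<and>
                 hhyperplane t \<and> fixspace \<rho>2 \<subseteq> t \<and> W = s \<inter> t) \<Longrightarrow> W \<in> bank h"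
  unfolding bank_def mem_Collect_eq by (intro conjI disjI2) blast+

theorem theorem5p5:
  fixes \<gamma> :: "real^5 \<Rightarrow> real^5"
  assumes "orient_isom \<gamma>"
  shows "\<forall>k\<in>bank \<gamma>. \<exists>k1\<in>bank \<gamma>. \<exists>k2\<in>bank \<gamma>.
           \<gamma> = halfturn k1 \<circ> halfturn k \<and> \<gamma> = halfturn k \<circ> halfturn k2"
proof
  fix k assume kb: "k \<in> bank \<gamma>"
  then have hk: "hplane k" by (simp add: bank_def)
  have cases:
    "\<gamma> = id \<or>
     (elliptic_II \<gamma> \<and> \<gamma> \<circ> \<gamma> = id \<and> fixspace \<gamma> \<subseteq> k) \<or>
     (elliptic_I \<gamma> \<and> (\<exists>s t. hhyperplane s \<and> fixspace \<gamma> \<subseteq> s \<and>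
          hhyperplane t \<and> hyp_orth t (fixspace \<gamma>) \<and> k = s \<inter> t)) \<or>
     (pure_hyperbolic \<gamma> \<and> (\<exists>s t. hhyperplane s \<and> hyp_orth s (axis \<gamma>) \<and>
          hhyperplane t \<and> axis \<gamma> \<subseteq> t \<and> k = s \<inter> t)) \<or>
     (pure_parabolic \<gamma> \<and> (\<exists>g b. par_conj \<gamma> g b \<and>
          (\<exists>s\<in>parF g b. \<exists>t\<in>parT g b. k = s \<inter> t))) \<or>
     (pure_loxodromic \<gamma> \<and> (\<exists>\<tau> \<rho>. pure_hyperbolic \<tau> \<and> elliptic_I \<rho> \<and>
          \<gamma> = \<tau> \<circ> \<rho> \<and> \<gamma> = \<rho> \<circ> \<tau> \<and>
          (\<exists>s t. hhyperplane s \<and> hyp_orth s (axis \<tau>) \<and>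
                 hhyperplane t \<and> fixspace \<rho> \<subseteq> t \<and> k = s \<inter> t))) \<or>
     (screw_parabolic \<gamma> \<and> (\<exists>\<tau> \<rho> g b. par_conj \<tau> g b \<and> elliptic_I \<rho> \<and>
          \<gamma> = \<tau> \<circ> \<rho> \<and> \<gamma> = \<rho> \<circ> \<tau> \<and>
          (\<exists>s\<in>parF g b. \<exists>t. hhyperplane t \<and> fixspace \<rho> \<subseteq> t \<and> k = s \<inter> t))) \<or>
     (elliptic_II \<gamma> \<and> \<gamma> \<circ> \<gamma> \<noteq> id \<and> (\<exists>\<rho>1 \<rho>2. elliptic_I \<rho>1 \<and> elliptic_I \<rho>2 \<and>
          \<gamma> = \<rho>1 \<circ> \<rho>2 \<and> \<gamma> = \<rho>2 \<circ> \<rho>1 \<and>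
          fixspace \<rho>1 \<inter> fixspace \<rho>2 = fixspace \<gamma> \<and> mperp (fixspace \<rho>1) \<subseteq> fixspace \<rho>2 \<and>
          (\<exists>s t. hhyperplane s \<and> fixspace \<rho>1 \<subseteq> s \<and>
                 hhyperplane t \<and> fixspace \<rho>2 \<subseteq> t \<and> k = s \<inter> t)))"
    using kb unfolding bank_def mem_Collect_eq by (rule conjunct2)
  then show "\<exists>k1\<in>bank \<gamma>. \<exists>k2\<in>bank \<gamma>. \<gamma> = halfturn k1 \<circ> halfturn k \<and> \<gamma> = halfturn k \<circ> halfturn k2"
  proof (elim disjE exE conjE bexE)
    assume g: "\<gamma> = id"
    have "k \<in> bank \<gamma>" by (rule kb)
    moreover have "\<gamma> = halfturn k \<circ> halfturn k" using halfturn_props(2)[OF hk] g by simp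
    ultimately show ?thesis by blast
  next
    assume g: "elliptic_II \<gamma>" "\<gamma> \<circ> \<gamma> = id" "fixspace \<gamma> \<subseteq> k"
    obtain k1 where k1: "hplane k1" "fixspace \<gamma> \<subseteq> k1" "\<gamma> = halfturn k1 \<circ> halfturn k"
        "\<gamma> = halfturn k \<circ> halfturn k1"
      using caseInv[OF g(1,2) hk g(3)] by blast
    have "k1 \<in> bank \<gamma>" using k1 g by (intro bank_inv) auto
    then show ?thesis using k1 by blast
  next
    fix s t
    assume g: "elliptic_I \<gamma>" and st: "hhyperplane s" "fixspace \<gamma> \<subseteq> s" "hhyperplane t"
      "hyp_orth t (fixspace \<gamma>)" "k = s \<inter> t"
    obtain k1 where k1: "hplane k1" "\<exists>s t. hhyperplane s \<and> fixspace \<gamma> \<subseteq> s \<and>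
          hhyperplane t \<and> hyp_orth t (fixspace \<gamma>) \<and> k1 = s \<inter> t" "\<gamma> = halfturn k1 \<circ> halfturn k"
      using caseI(1)[OF g st] by blast
    obtain k2 where k2: "hplane k2" "\<exists>s t. hhyperplane s \<and> fixspace \<gamma> \<subseteq> s \<and>
          hhyperplane t \<and> hyp_orth t (fixspace \<gamma>) \<and> k2 = s \<inter> t" "\<gamma> = halfturn k \<circ> halfturn k2"
      using caseI(2)[OF g st] by blast
    have "k1 \<in> bank \<gamma>" "k2 \<in> bank \<gamma>" using bank_I[OF k1(1) g k1(2)] bank_I[OF k2(1) g k2(2)] by auto
    then show ?thesis using k1 k2 by blast
  next
    fix s t
    assume g: "pure_hyperbolic \<gamma>" and st: "hhyperplane s" "hyp_orth s (axis \<gamma>)" "hhyperplane t"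
      "axis \<gamma> \<subseteq> t" "k = s \<inter> t"
    obtain k1 where k1: "hplane k1" "\<exists>s t. hhyperplane s \<and> hyp_orth s (axis \<gamma>) \<and>
          hhyperplane t \<and> axis \<gamma> \<subseteq> t \<and> k1 = s \<inter> t" "\<gamma> = halfturn k1 \<circ> halfturn k"
      using caseH(1)[OF g st] by blast
    obtain k2 where k2: "hplane k2" "\<exists>s t. hhyperplane s \<and> hyp_orth s (axis \<gamma>) \<and>
          hhyperplane t \<and> axis \<gamma> \<subseteq> t \<and> k2 = s \<inter> t" "\<gamma> = halfturn k \<circ> halfturn k2"
      using caseH(2)[OF g st] by blast
    have "k1 \<in> bank \<gamma>" "k2 \<in> bank \<gamma>" using bank_H[OF k1(1) g k1(2)] bank_H[OF k2(1) g k2(2)] by auto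
    then show ?thesis using k1 k2 by blast
  next
    fix g b s t
    assume pp: "pure_parabolic \<gamma>" and pc: "par_conj \<gamma> g b" and s: "s \<in> parF g b" and t: "t \<in> parT g b"
      and k: "k = s \<inter> t"
    obtain k1 where k1: "hplane k1" "\<exists>s\<in>parF g b. \<exists>t\<in>parT g b. k1 = s \<inter> t" "\<gamma> = halfturn k1 \<circ> halfturn k"
      using caseP(1)[OF pc s t k] by blast
    obtain k2 where k2: "hplane k2" "\<exists>s\<in>parF g b. \<exists>t\<in>parT g b. k2 = s \<inter> t" "\<gamma> = halfturn k \<circ> halfturn k2"
      using caseP(2)[OF pc s t k] by blast
    have "k1 \<in> bank \<gamma>" "k2 \<in> bank \<gamma>" using bank_P[OF k1(1) pp pc k1(2)] bank_P[OF k2(1) pp pc k2(2)] by auto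
    then show ?thesis using k1 k2 by blast
  next
    fix \<tau> \<rho> s t
    assume pl: "pure_loxodromic \<gamma>" and ph: "pure_hyperbolic \<tau>" and r: "elliptic_I \<rho>"
      and g1: "\<gamma> = \<tau> \<circ> \<rho>" and g2: "\<gamma> = \<rho> \<circ> \<tau>"
      and st: "hhyperplane s" "hyp_orth s (axis \<tau>)" "hhyperplane t" "fixspace \<rho> \<subseteq> t" "k = s \<inter> t"
    obtain k1 where k1: "hplane k1" "\<exists>s t. hhyperplane s \<and> hyp_orth s (axis \<tau>) \<and>
          hhyperplane t \<and> fixspace \<rho> \<subseteq> t \<and> k1 = s \<inter> t" "\<gamma> = halfturn k1 \<circ> halfturn k"
      using caseL(1)[OF ph r g1 g2 st] by blast
    obtain k2 where k2: "hplane k2" "\<exists>s t. hhyperplane s \<and> hyp_orth s (axis \<tau>) \<and>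
          hhyperplane t \<and> fixspace \<rho> \<subseteq> t \<and> k2 = s \<inter> t" "\<gamma> = halfturn k \<circ> halfturn k2"
      using caseL(2)[OF ph r g1 g2 st] by blast
    have "k1 \<in> bank \<gamma>" "k2 \<in> bank \<gamma>" using bank_L[OF k1(1) pl ph r g1 g2 k1(2)] bank_L[OF k2(1) pl ph r g1 g2 k2(2)] by auto
    then show ?thesis using k1 k2 by blast
  next
    fix \<tau> \<rho> g b s t
    assume sp: "screw_parabolic \<gamma>" and pc: "par_conj \<tau> g b" and r: "elliptic_I \<rho>"
      and g1: "\<gamma> = \<tau> \<circ> \<rho>" and g2: "\<gamma> = \<rho> \<circ> \<tau>"
      and s: "s \<in> parF g b" and t: "hhyperplane t" "fixspace \<rho> \<subseteq> t" and k: "k = s \<inter> t"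
    obtain k1 where k1: "hplane k1" "\<exists>s\<in>parF g b. \<exists>t. hhyperplane t \<and> fixspace \<rho> \<subseteq> t \<and> k1 = s \<inter> t"
        "\<gamma> = halfturn k1 \<circ> halfturn k"
      using caseS(1)[OF pc r g1 g2 s t k] by blast
    obtain k2 where k2: "hplane k2" "\<exists>s\<in>parF g b. \<exists>t. hhyperplane t \<and> fixspace \<rho> \<subseteq> t \<and> k2 = s \<inter> t"
        "\<gamma> = halfturn k \<circ> halfturn k2"
      using caseS(2)[OF pc r g1 g2 s t k] by blast
    have "k1 \<in> bank \<gamma>" "k2 \<in> bank \<gamma>" using bank_S[OF k1(1) sp pc r g1 g2 k1(2)] bank_S[OF k2(1) sp pc r g1 g2 k2(2)] by auto
    then show ?thesis using k1 k2 by blast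
  next
    fix \<rho>1 \<rho>2 s t
    assume e2: "elliptic_II \<gamma>" and ni: "\<gamma> \<circ> \<gamma> \<noteq> id" and r1: "elliptic_I \<rho>1" and r2: "elliptic_I \<rho>2"
      and g1: "\<gamma> = \<rho>1 \<circ> \<rho>2" and g2: "\<gamma> = \<rho>2 \<circ> \<rho>1"
      and fi: "fixspace \<rho>1 \<inter> fixspace \<rho>2 = fixspace \<gamma>" and pp: "mperp (fixspace \<rho>1) \<subseteq> fixspace \<rho>2"
      and st: "hhyperplane s" "fixspace \<rho>1 \<subseteq> s" "hhyperplane t" "fixspace \<rho>2 \<subseteq> t" "k = s \<inter> t"
    obtain k1 where k1: "hplane k1" "\<exists>s t. hhyperplane s \<and> fixspace \<rho>1 \<subseteq> s \<and>
          hhyperplane t \<and> fixspace \<rho>2 \<subseteq> t \<and> k1 = s \<inter> t" "\<gamma> = halfturn k1 \<circ> halfturn k"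
      using caseII(1)[OF r1 r2 g1 g2 pp st] by blast
    obtain k2 where k2: "hplane k2" "\<exists>s t. hhyperplane s \<and> fixspace \<rho>1 \<subseteq> s \<and>
          hhyperplane t \<and> fixspace \<rho>2 \<subseteq> t \<and> k2 = s \<inter> t" "\<gamma> = halfturn k \<circ> halfturn k2"
      using caseII(2)[OF r1 r2 g1 g2 pp st] by blast
    have "k1 \<in> bank \<gamma>" "k2 \<in> bank \<gamma>" using bank_II[OF k1(1) e2 ni r1 r2 g1 g2 fi pp k1(2)] bank_II[OF k2(1) e2 ni r1 r2 g1 g2 fi pp k2(2)] by auto
    then show ?thesis using k1 k2 by blast
  qed
qed


end
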